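(* Let $F\in\mathbf F$ satisfy conditions $\mathbf{KP}$ and $\mathbf{HN^0}$. Then $A_T(F)$ is closed in probability, i.e. if $(g^n)_{n\ge1}\subset A_T(F)$ converges in probability (equivalently, along a subsequence a.s.) to some $g\in L^0(\mathbb R^d;\mathcal F)$, then $g\in A_T(F)$.
   Context: Fix $T\in\mathbb N$, $\mathbb T=\{0,\dots,T\}$, $d\ge1$, a complete probability space $(\Omega,\mathcal F,\mathbb P)$ and a filtration $\mathbb H=(\mathcal H_t)_{t\in\mathbb T}$ with $\mathcal H_T\subset\mathcal F$ (no other relation between $\mathbb H$ and the other processes is assumed). Equalities and inequalities between random variables are understood $\mathbb P$-a.s. $\mathbb M^d$ denotes the real $d\times d$ matrices, $\mathbb M^d_+$ those with nonnegative entries, and $e_{ij}$ the matrix whose $(i,j)$ entry is $1$ and all other entries $0$. For $E\subset\mathbb M^d$ (or $E\subset\mathbb R^d$) and a $\sigma$-algebra $\mathcal G\subset\mathcal F$, $L^0(E;\mathcal G)$ is the set of $E$-valued $\mathcal G$-measurable random variables; $L^1(\mathbb R^d;\mathcal F)$ and $L^\infty(\mathbb R^d;\mathcal F)$ are the integrable, resp. bounded, elements of $L^0(\mathbb R^d;\mathcal F)$. A closed convex cone $\mathcal A\subset\mathbb M^d$ is fixed; $\mathbb L^0(\mathcal A;\mathbb H)$ denotes the set of $\mathcal A$-valued $\mathbb H$-adapted processes $(\eta_t)_{t\in\mathbb T}$. $\mathbb F$ is the set of continuous maps $f:\mathbb M^d\to\mathbb R^d$ such that (HF1) $f(\lambda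 a)=\lambda f(a)$ for all $\lambda\ge0$, $a\in\mathbb M^d$; (HF2) $f(\lambda a+\beta a')-(\lambda f(a)+\beta f(a'))\in\mathbb R^d_+$ for all $\lambda,\beta\ge0$, $a,a'\in\mathcal A$. $\mathbf F$ is the set of sequences $F=(F_t)_{t\in\mathbb T}$ of $\mathcal F$-measurable random maps $F_t:\Omega\times\mathbb M^d\to\mathbb R^d$ with $F_t(\omega,\cdot)\in\mathbb F$ for a.e. $\omega$ (no adaptedness to $\mathbb H$ is assumed); for a random matrix $\eta$, $F_t(\eta)(\omega)=F_t(\omega,\eta(\omega))$. $N_t(F)=\{F_t(\eta):\eta\in L^0(\mathcal A;\mathcal H_t)\}$, $N^0_t(F)=N_t(F)\cap(-N_t(F))$. For a process $\xi=(\xi_t)_{t\in\mathbb T}$, "$\xi\in N(F)$" means $\xi_t\in N_t(F)$ for all $t$, and "$\xi\in N^0(F)$" means $\xi_t\in N^0_t(F)$ for all $t$. $V_t(\xi)=\sum_{s=0}^t\xi_s$ and $A_t(F)=\{V_t(\xi)-r:\ \xi\in N(F),\ r\in L^0(\mathbb R^d_+;\mathcal F)\}$. Condition $\mathbf{KP}$: for all $\xi,\tilde\xi\in N(F)$, $V_T(\xi)+V_T(\tilde\xi)\in L^0(\mathbb R^d_+;\mathcal F)$ implies $\xi\in N^0(F)$ and $V_T(\xi)+V_T(\tilde\xi)=0$. Condition $\mathbf{HN^0}$: for all $t\in\mathbb T$ and $\eta\in L^0(\mathcal A;\mathcal H_t)$, $F_t(\eta)\in N^0_t(F)$ implies $F_t(-\eta)=-F_t(\eta)$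 and $-\eta\in L^0(\mathcal A;\mathcal H_t)$. *)

theory Defs
  imports "HOL-Probability.Probability"
begin

type_synonym 'd mat = "real^'d^'d"
type_synonym 'd vect = "real^'d"

definition nonneg_vec :: "real^'d \<Rightarrow> bool" where
  "nonneg_vec x \<longleftrightarrow> (\<forall>i. 0 \<le> x $ i)"

definition classF :: "('d::finite) mat set \<Rightarrow> ('d mat \<Rightarrow> 'd vect) set" where
  "classF A = {f. continuous_on UNIV f
     \<and> (\<forall>c::real. \<forall>a. c \<ge> 0 \<longrightarrow> f (c *\<^sub>R a) = c *\<^sub>R f a)
     \<and> (\<forall>c b a a'. c \<ge> 0 \<longrightarrow> b \<ge> 0 \<longrightarrow> a \<in> A \<longrightarrow> a' \<in> A \<longrightarrow>
          nonneg_vec (f (c *\<^sub>R a + b *\<^sub>R a') - (c *\<^sub>R f a + b *\<^sub>R f a')))}"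

definition randomF :: "'w measure \<Rightarrow> ('d::finite) mat set \<Rightarrow> (nat \<Rightarrow> 'w \<Rightarrow> 'd mat \<Rightarrow> 'd vect) \<Rightarrow> bool" where
  "randomF M A F \<longleftrightarrow> (\<forall>t a. (\<lambda>\<omega>. F t \<omega> a) \<in> borel_measurable M)
     \<and> (\<forall>t. AE \<omega> in M. F t \<omega> \<in> classF A)"

definition L0A :: "'w measure \<Rightarrow> (nat \<Rightarrow> 'w measure) \<Rightarrow> ('d::finite) mat set \<Rightarrow> nat \<Rightarrow> ('w \<Rightarrow> 'd mat) set" where
  "L0A M H A t = {\<eta>. \<eta> \<in> borel_measurable (H t) \<and> (\<forall>\<omega>\<in>space M. \<eta> \<omega> \<in> A)}"

definition inN :: "'w measure \<Rightarrow> (nat \<Rightarrow> 'w measure) \<Rightarrow> ('d::finite) mat set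
    \<Rightarrow> (nat \<Rightarrow> 'w \<Rightarrow> 'd mat \<Rightarrow> 'd vect) \<Rightarrow> nat \<Rightarrow> ('w \<Rightarrow> 'd vect) \<Rightarrow> bool" where
  "inN M H A F t \<xi> \<longleftrightarrow> (\<exists>\<eta>\<in>L0A M H A t. AE \<omega> in M. \<xi> \<omega> = F t \<omega> (\<eta> \<omega>))"

definition inN0 :: "'w measure \<Rightarrow> (nat \<Rightarrow> 'w measure) \<Rightarrow> ('d::finite) mat set
    \<Rightarrow> (nat \<Rightarrow> 'w \<Rightarrow> 'd mat \<Rightarrow> 'd vect) \<Rightarrow> nat \<Rightarrow> ('w \<Rightarrow> 'd vect) \<Rightarrow> bool" where
  "inN0 M H A F t \<xi> \<longleftrightarrow> inN M H A F t \<xi> \<and> inN M H A F t (\<lambda>\<omega>. - \<xi> \<omega>)"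

definition V :: "(nat \<Rightarrow> 'w \<Rightarrow> 'd vect) \<Rightarrow> nat \<Rightarrow> 'w \<Rightarrow> ('d::finite) vect" where
  "V \<xi> t = (\<lambda>\<omega>. \<Sum>s\<le>t. \<xi> s \<omega>)"

definition inNproc :: "'w measure \<Rightarrow> (nat \<Rightarrow> 'w measure) \<Rightarrow> ('d::finite) mat set
    \<Rightarrow> (nat \<Rightarrow> 'w \<Rightarrow> 'd mat \<Rightarrow> 'd vect) \<Rightarrow> nat \<Rightarrow> (nat \<Rightarrow> 'w \<Rightarrow> 'd vect) \<Rightarrow> bool" where
  "inNproc M H A F T \<xi> \<longleftrightarrow> (\<forall>t\<le>T. inN M H A F t (\<xi> t))"

definition inN0proc :: "'w measure \<Rightarrow> (nat \<Rightarrow> 'w measure) \<Rightarrow> ('d::finite) mat set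
    \<Rightarrow> (nat \<Rightarrow> 'w \<Rightarrow> 'd mat \<Rightarrow> 'd vect) \<Rightarrow> nat \<Rightarrow> (nat \<Rightarrow> 'w \<Rightarrow> 'd vect) \<Rightarrow> bool" where
  "inN0proc M H A F T \<xi> \<longleftrightarrow> (\<forall>t\<le>T. inN0 M H A F t (\<xi> t))"

definition inAT :: "'w measure \<Rightarrow> (nat \<Rightarrow> 'w measure) \<Rightarrow> ('d::finite) mat set
    \<Rightarrow> (nat \<Rightarrow> 'w \<Rightarrow> 'd mat \<Rightarrow> 'd vect) \<Rightarrow> nat \<Rightarrow> ('w \<Rightarrow> 'd vect) \<Rightarrow> bool" where
  "inAT M H A F T g \<longleftrightarrow> g \<in> borel_measurable M \<and>
     (\<exists>\<xi> r. inNproc M H A F T \<xi> \<and> r \<in> borel_measurable M \<and> (\<forall>\<omega>\<in>space M. nonneg_vec (r \<omega>))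
        \<and> (AE \<omega> in M. g \<omega> = V \<xi> T \<omega> - r \<omega>))"

definition KP :: "'w measure \<Rightarrow> (nat \<Rightarrow> 'w measure) \<Rightarrow> ('d::finite) mat set
    \<Rightarrow> (nat \<Rightarrow> 'w \<Rightarrow> 'd mat \<Rightarrow> 'd vect) \<Rightarrow> nat \<Rightarrow> bool" where
  "KP M H A F T \<longleftrightarrow> (\<forall>\<xi> \<xi>'. inNproc M H A F T \<xi> \<longrightarrow> inNproc M H A F T \<xi>' \<longrightarrow>
      (AE \<omega> in M. nonneg_vec (V \<xi> T \<omega> + V \<xi>' T \<omega>)) \<longrightarrow>
      inN0proc M H A F T \<xi> \<and> (AE \<omega> in M. V \<xi> T \<omega> + V \<xi>' T \<omega> = 0))"

definition HN0 :: "'w measure \<Rightarrow> (nat \<Rightarrow> 'w measure) \<Rightarrow> ('d::finite) mat set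
    \<Rightarrow> (nat \<Rightarrow> 'w \<Rightarrow> 'd mat \<Rightarrow> 'd vect) \<Rightarrow> nat \<Rightarrow> bool" where
  "HN0 M H A F T \<longleftrightarrow> (\<forall>t\<le>T. \<forall>\<eta>\<in>L0A M H A t.
      inN0 M H A F t (\<lambda>\<omega>. F t \<omega> (\<eta> \<omega>)) \<longrightarrow>
      (AE \<omega> in M. F t \<omega> (- \<eta> \<omega>) = - F t \<omega> (\<eta> \<omega>)) \<and> (AE \<omega> in M. - \<eta> \<omega> \<in> A))"

definition conv_in_prob :: "'w measure \<Rightarrow> (nat \<Rightarrow> 'w \<Rightarrow> 'd vect) \<Rightarrow> ('w \<Rightarrow> ('d::finite) vect) \<Rightarrow> bool" where
  "conv_in_prob M g h \<longleftrightarrow> (\<forall>\<epsilon>>0. (\<lambda>n. measure M {\<omega>\<in>space M. dist (g n \<omega>) (h \<omega>) > \<epsilon>}) \<longlonglongrightarrow> 0)"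

end

theory Submission
  imports Defs
begin
primrec rsel :: "(nat \<Rightarrow> nat \<Rightarrow> 'w \<Rightarrow> bool) \<Rightarrow> nat \<Rightarrow> 'w \<Rightarrow> nat" where
  "rsel P 0 \<omega> = (LEAST n. P 0 n \<omega>)"
| "rsel P (Suc k) \<omega> = (LEAST n. rsel P k \<omega> < n \<and> P (Suc k) n \<omega>)"

lemma rsel_measurable:
  assumes meas: "\<And>k n. Measurable.pred G (P k n)"
  shows "rsel P k \<in> G \<rightarrow>\<^sub>M count_space UNIV"
proof (induction k)
  case 0
  show ?case using meas by (simp add: measurable_Least)
next
  case (Suc k)
  note [measurable] = Suc meas
  show ?case by simp
qed

lemma rsel_props:
  assumes freq: "\<And>k N. \<exists>n\<ge>N. P k n \<omega>"
  shows "P k (rsel P k \<omega>) \<omega> \<and> rsel P k \<omega> < rsel P (Suc k) \<omega>"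
proof -
  have a: "P k (rsel P k \<omega>) \<omega>" for k
  proof (cases k)
    case 0
    then show ?thesis using freq[of 0 0] by (auto intro: LeastI_ex)
  next
    case (Suc j)
    obtain n where "n \<ge> Suc (rsel P j \<omega>)" "P (Suc j) n \<omega>" using freq by blast
    then have "\<exists>n. rsel P j \<omega> < n \<and> P (Suc j) n \<omega>" by (intro exI[of _ n]) auto
    from LeastI_ex[OF this] show ?thesis using Suc by simp
  qed
  obtain n where "n \<ge> Suc (rsel P k \<omega>)" "P (Suc k) n \<omega>" using freq by blast
  then have "\<exists>n. rsel P k \<omega> < n \<and> P (Suc k) n \<omega>" by (intro exI[of _ n]) auto
  from LeastI_ex[OF this] have "rsel P k \<omega> < rsel P (Suc k) \<omega>" by simp
  with a show ?thesis by blast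
qed

lemma random_select:
  fixes P :: "nat \<Rightarrow> nat \<Rightarrow> 'w \<Rightarrow> bool"
  assumes meas: "\<And>k n. Measurable.pred G (P k n)"
  and freq: "\<And>\<omega> k N. \<omega> \<in> space G \<Longrightarrow> \<exists>n\<ge>N. P k n \<omega>"
  shows "\<exists>\<tau>. (\<forall>k. \<tau> k \<in> G \<rightarrow>\<^sub>M count_space UNIV) \<and>
     (\<forall>\<omega>\<in>space G. strict_mono (\<lambda>k. \<tau> k \<omega>) \<and> (\<forall>k. P k (\<tau> k \<omega>) \<omega>))"
proof (intro exI[of _ "rsel P"] conjI ballI allI)
  show "rsel P k \<in> G \<rightarrow>\<^sub>M count_space UNIV" for k using rsel_measurable[OF meas] .
  fix \<omega> assume "\<omega> \<in> space G"
  then have f: "\<And>k N. \<exists>n\<ge>N. P k n \<omega>" using freq by blast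
  show "strict_mono (\<lambda>k. rsel P k \<omega>)"
    by (rule strict_monoI_Suc) (use rsel_props[of P \<omega>, OF f] in blast)
  show "P k (rsel P k \<omega>) \<omega>" for k using rsel_props[of P \<omega>, OF f] by blast
qed

lemma rsub_compose:
  fixes \<tau> \<sigma> :: "nat \<Rightarrow> 'w \<Rightarrow> nat"
  assumes "\<And>k. \<tau> k \<in> G \<rightarrow>\<^sub>M count_space UNIV" "\<And>k. \<sigma> k \<in> G \<rightarrow>\<^sub>M count_space UNIV"
  shows "(\<lambda>\<omega>. \<tau> (\<sigma> k \<omega>) \<omega>) \<in> G \<rightarrow>\<^sub>M count_space UNIV"
  by (rule measurable_compose_countable[where f=\<tau>]) (use assms in auto)

lemma scalar_KS:
  fixes Z :: "nat \<Rightarrow> 'w \<Rightarrow> real"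
  assumes meas[measurable]: "\<And>n. Z n \<in> borel_measurable G"
  and bnd: "\<And>\<omega>. \<omega> \<in> space G \<Longrightarrow> \<exists>K. \<forall>n. \<bar>Z n \<omega>\<bar> \<le> K"
  shows "\<exists>\<tau>. (\<forall>k. \<tau> k \<in> G \<rightarrow>\<^sub>M count_space UNIV) \<and>
     (\<forall>\<omega>\<in>space G. strict_mono (\<lambda>k. \<tau> k \<omega>) \<and> convergent (\<lambda>k. Z (\<tau> k \<omega>) \<omega>))"
proof -
  define c where "c \<omega> = real_of_ereal (limsup (\<lambda>n. ereal (Z n \<omega>)))" for \<omega>
  have [measurable]: "c \<in> borel_measurable G" unfolding c_def by measurable
  define P where "P k n \<omega> = (\<bar>Z n \<omega> - c \<omega>\<bar> < 1 / Suc k)" for k n \<omega>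
  have Pm: "Measurable.pred G (P k n)" for k n unfolding P_def by measurable
  have freq: "\<exists>n\<ge>N. P k n \<omega>" if \<omega>: "\<omega> \<in> space G" for \<omega> k N
  proof -
    obtain K where K: "\<And>n. \<bar>Z n \<omega>\<bar> \<le> K" using bnd[OF \<omega>] by blast
    obtain r where r: "strict_mono r" "((\<lambda>n. ereal (Z n \<omega>)) o r) \<longlonglongrightarrow> limsup (\<lambda>n. ereal (Z n \<omega>))"
      using limsup_subseq_lim by blast
    have Kl: "\<And>n. -K \<le> Z n \<omega>" using K by (metis abs_le_D2 minus_le_iff)
    define L where "L = limsup (\<lambda>n. ereal (Z n \<omega>))"
    have r2: "(\<lambda>n. ereal (Z (r n) \<omega>)) \<longlonglongrightarrow> L" using r(2) unfolding L_def o_def .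
    have "L \<le> ereal K"
      by (rule LIMSEQ_le_const2[OF r2]) (use K abs_le_D1 in auto)
    moreover have "ereal (-K) \<le> L"
      by (rule LIMSEQ_le_const[OF r2]) (use Kl in auto)
    ultimately have "L = ereal (c \<omega>)" unfolding c_def L_def[symmetric] by (cases L) auto
    with r2 have "(\<lambda>n. Z (r n) \<omega>) \<longlonglongrightarrow> c \<omega>" by (simp add: lim_ereal)
    then have "\<forall>\<^sub>F n in sequentially. dist (Z (r n) \<omega>) (c \<omega>) < 1 / Suc k"
      by (rule tendstoD) simp
    then obtain M where M: "\<And>n. n \<ge> M \<Longrightarrow> dist (Z (r n) \<omega>) (c \<omega>) < 1 / Suc k"
      by (auto simp: eventually_sequentially)
    have "r (max M N) \<ge> N" using seq_suble[OF r(1), of "max M N"] by simp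
    moreover have "P k (r (max M N)) \<omega>" using M[of "max M N"] by (simp add: P_def dist_real_def)
    ultimately show ?thesis by blast
  qed
  obtain \<tau> where \<tau>: "\<forall>k. \<tau> k \<in> G \<rightarrow>\<^sub>M count_space UNIV"
     "\<forall>\<omega>\<in>space G. strict_mono (\<lambda>k. \<tau> k \<omega>) \<and> (\<forall>k. P k (\<tau> k \<omega>) \<omega>)"
    using random_select[of P G, OF Pm freq] by blast
  show ?thesis
  proof (intro exI[of _ \<tau>] conjI ballI)
    show "\<forall>k. \<tau> k \<in> G \<rightarrow>\<^sub>M count_space UNIV" using \<tau> by blast
    fix \<omega> assume \<omega>: "\<omega> \<in> space G"
    show "strict_mono (\<lambda>k. \<tau> k \<omega>)" using \<tau> \<omega> by blast
    have "(\<lambda>k. Z (\<tau> k \<omega>) \<omega>) \<longlonglongrightarrow> c \<omega>"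
    proof (rule LIMSEQ_I)
      fix r :: real assume "0 < r"
      obtain k0 where k0: "1 / Suc k0 < r" using \<open>0<r\<close>
        by (metis nat_approx_posE of_nat_Suc)
      show "\<exists>no. \<forall>n\<ge>no. norm (Z (\<tau> n \<omega>) \<omega> - c \<omega>) < r"
      proof (intro exI allI impI)
        fix n assume "k0 \<le> n"
        then have "1 / real (Suc n) \<le> 1 / Suc k0" by (simp add: frac_le)
        moreover have "P n (\<tau> n \<omega>) \<omega>" using \<tau> \<omega> by blast
        ultimately show "norm (Z (\<tau> n \<omega>) \<omega> - c \<omega>) < r" using k0 by (simp add: P_def)
      qed
    qed
    then show "convergent (\<lambda>k. Z (\<tau> k \<omega>) \<omega>)" by (auto simp: convergent_def)
  qed
qed

lemma KS_bounded_fin: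
  fixes Y :: "nat \<Rightarrow> 'w \<Rightarrow> 'a::euclidean_space"
  assumes meas[measurable]: "\<And>n. Y n \<in> borel_measurable G"
  and bnd: "\<And>\<omega>. \<omega> \<in> space G \<Longrightarrow> \<exists>K. \<forall>n. norm (Y n \<omega>) \<le> K"
  and fin: "finite B"
  shows "\<exists>\<tau>. (\<forall>k. \<tau> k \<in> G \<rightarrow>\<^sub>M count_space UNIV) \<and>
     (\<forall>\<omega>\<in>space G. strict_mono (\<lambda>k. \<tau> k \<omega>) \<and> (\<forall>b\<in>B. convergent (\<lambda>k. Y (\<tau> k \<omega>) \<omega> \<bullet> b)))"
  using fin
proof (induction B rule: finite_induct)
  case empty
  show ?case
    by (intro exI[of _ "\<lambda>k \<omega>. k"]) (auto simp: strict_mono_def)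
next
  case (insert b B)
  then obtain \<tau> where \<tau>: "\<forall>k. \<tau> k \<in> G \<rightarrow>\<^sub>M count_space UNIV"
    "\<forall>\<omega>\<in>space G. strict_mono (\<lambda>k. \<tau> k \<omega>) \<and> (\<forall>b\<in>B. convergent (\<lambda>k. Y (\<tau> k \<omega>) \<omega> \<bullet> b))"
    by blast
  define Z where "Z k \<omega> = Y (\<tau> k \<omega>) \<omega> \<bullet> b" for k \<omega>
  have Zm: "Z k \<in> borel_measurable G" for k
    unfolding Z_def
    by (rule measurable_compose_countable[where f="\<lambda>i \<omega>. Y i \<omega> \<bullet> b"]) (use \<tau> in auto)
  have Zb: "\<exists>K. \<forall>n. \<bar>Z n \<omega>\<bar> \<le> K" if w: "\<omega> \<in> space G" for \<omega>
  proof -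
    obtain K where K: "\<And>n. norm (Y n \<omega>) \<le> K" using bnd[OF w] by blast
    have "\<bar>Z n \<omega>\<bar> \<le> K * norm b" for n
      unfolding Z_def
      by (rule order.trans[OF Cauchy_Schwarz_ineq2]) (simp add: K mult_right_mono)
    then show ?thesis by blast
  qed
  obtain \<sigma> where \<sigma>: "\<forall>k. \<sigma> k \<in> G \<rightarrow>\<^sub>M count_space UNIV"
     "\<forall>\<omega>\<in>space G. strict_mono (\<lambda>k. \<sigma> k \<omega>) \<and> convergent (\<lambda>k. Z (\<sigma> k \<omega>) \<omega>)"
    using scalar_KS[of Z G, OF Zm Zb] by blast
  show ?case
  proof (intro exI[of _ "\<lambda>k \<omega>. \<tau> (\<sigma> k \<omega>) \<omega>"] conjI allI ballI)
    show "(\<lambda>\<omega>. \<tau> (\<sigma> k \<omega>) \<omega>) \<in> G \<rightarrow>\<^sub>M count_space UNIV" for k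
      by (rule rsub_compose) (use \<tau> \<sigma> in auto)
    fix \<omega> assume \<omega>: "\<omega> \<in> space G"
    have sm1: "strict_mono (\<lambda>k. \<tau> k \<omega>)" and sm2: "strict_mono (\<lambda>k. \<sigma> k \<omega>)" using \<tau> \<sigma> \<omega> by auto
    show "strict_mono (\<lambda>k. \<tau> (\<sigma> k \<omega>) \<omega>)"
      using strict_mono_o[OF sm1 sm2] by (simp add: o_def)
    fix c assume "c \<in> insert b B"
    then show "convergent (\<lambda>k. Y (\<tau> (\<sigma> k \<omega>) \<omega>) \<omega> \<bullet> c)"
    proof
      assume "c = b"
      then show ?thesis using \<sigma> \<omega> by (simp add: Z_def)
    next
      assume "c \<in> B"
      then have "convergent (\<lambda>k. Y (\<tau> k \<omega>) \<omega> \<bullet> c)" using \<tau> \<omega> by blast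
      then obtain l where "(\<lambda>k. Y (\<tau> k \<omega>) \<omega> \<bullet> c) \<longlonglongrightarrow> l" by (auto simp: convergent_def)
      from LIMSEQ_subseq_LIMSEQ[OF this sm2] show ?thesis by (auto simp: convergent_def o_def)
    qed
  qed
qed

lemma convergent_euclidean:
  fixes v :: "nat \<Rightarrow> 'a::euclidean_space"
  assumes "\<And>b. b \<in> Basis \<Longrightarrow> convergent (\<lambda>k. v k \<bullet> b)"
  shows "convergent v"
proof -
  define l where "l = (\<Sum>b\<in>Basis. lim (\<lambda>k. v k \<bullet> b) *\<^sub>R b)"
  have "v \<longlonglongrightarrow> l"
  proof (rule iffD2[OF tendsto_componentwise_iff], intro ballI)
    fix i :: 'a assume i: "i \<in> Basis"
    have "l \<bullet> i = lim (\<lambda>k. v k \<bullet> i)" unfolding l_def using i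
      by (simp add: inner_sum_left_Basis)
    then show "(\<lambda>k. v k \<bullet> i) \<longlonglongrightarrow> l \<bullet> i"
      using assms[OF i] convergent_LIMSEQ_iff by metis
  qed
  then show ?thesis unfolding convergent_def by blast
qed

lemma KS:
  fixes X :: "nat \<Rightarrow> 'w \<Rightarrow> 'a::euclidean_space"
  assumes meas[measurable]: "\<And>n. X n \<in> borel_measurable G"
  and bnd: "\<And>\<omega>. \<omega> \<in> space G \<Longrightarrow> \<exists>B. \<forall>N. \<exists>n\<ge>N. norm (X n \<omega>) \<le> B"
  shows "\<exists>\<tau>. (\<forall>k. \<tau> k \<in> G \<rightarrow>\<^sub>M count_space UNIV) \<and>
     (\<forall>\<omega>\<in>space G. strict_mono (\<lambda>k. \<tau> k \<omega>) \<and> convergent (\<lambda>k. X (\<tau> k \<omega>) \<omega>))"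
proof -
  define Bd where "Bd \<omega> = (LEAST m::nat. \<forall>N. \<exists>n\<ge>N. norm (X n \<omega>) \<le> real m)" for \<omega>
  have Bdm[measurable]: "Bd \<in> G \<rightarrow>\<^sub>M count_space UNIV" unfolding Bd_def by measurable
  define P where "P (k::nat) n \<omega> = (norm (X n \<omega>) \<le> real (Bd \<omega>))" for k n \<omega>
  have Pm: "Measurable.pred G (P k n)" for k n unfolding P_def by measurable
  have freq: "\<exists>n\<ge>N. P k n \<omega>" if \<omega>: "\<omega> \<in> space G" for \<omega> k N
  proof -
    obtain B where B: "\<forall>N. \<exists>n\<ge>N. norm (X n \<omega>) \<le> B" using bnd[OF \<omega>] by blast
    obtain m :: nat where "B \<le> real m" using real_arch_simple by blast
    have "\<forall>N. \<exists>n\<ge>N. norm (X n \<omega>) \<le> real m"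
    proof
      fix N obtain n where "n \<ge> N" "norm (X n \<omega>) \<le> B" using B by blast
      then show "\<exists>n\<ge>N. norm (X n \<omega>) \<le> real m" using \<open>B \<le> real m\<close> by auto
    qed
    then have "\<forall>N. \<exists>n\<ge>N. norm (X n \<omega>) \<le> real (Bd \<omega>)"
      unfolding Bd_def by (rule LeastI[of "\<lambda>m. \<forall>N. \<exists>n\<ge>N. norm (X n \<omega>) \<le> real m"])
    then show ?thesis by (simp add: P_def)
  qed
  obtain \<tau> where \<tau>: "\<forall>k. \<tau> k \<in> G \<rightarrow>\<^sub>M count_space UNIV"
     "\<forall>\<omega>\<in>space G. strict_mono (\<lambda>k. \<tau> k \<omega>) \<and> (\<forall>k. P k (\<tau> k \<omega>) \<omega>)"
    using random_select[of P G, OF Pm freq] by blast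
  define Y where "Y k \<omega> = X (\<tau> k \<omega>) \<omega>" for k \<omega>
  have Ym: "Y k \<in> borel_measurable G" for k
    unfolding Y_def by (rule measurable_compose_countable[where f=X]) (use \<tau> in auto)
  have Yb: "\<exists>K. \<forall>n. norm (Y n \<omega>) \<le> K" if w: "\<omega> \<in> space G" for \<omega>
  proof (intro exI allI)
    fix n show "norm (Y n \<omega>) \<le> real (Bd \<omega>)" using \<tau>(2) w unfolding Y_def P_def by blast
  qed
  obtain \<sigma> where \<sigma>: "\<forall>k. \<sigma> k \<in> G \<rightarrow>\<^sub>M count_space UNIV"
    "\<forall>\<omega>\<in>space G. strict_mono (\<lambda>k. \<sigma> k \<omega>) \<and> (\<forall>b\<in>Basis. convergent (\<lambda>k. Y (\<sigma> k \<omega>) \<omega> \<bullet> b))"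
    using KS_bounded_fin[of Y G Basis, OF Ym Yb] by auto
  show ?thesis
  proof (intro exI[of _ "\<lambda>k \<omega>. \<tau> (\<sigma> k \<omega>) \<omega>"] conjI allI ballI)
    show "(\<lambda>\<omega>. \<tau> (\<sigma> k \<omega>) \<omega>) \<in> G \<rightarrow>\<^sub>M count_space UNIV" for k
      by (rule rsub_compose) (use \<tau> \<sigma> in auto)
    fix \<omega> assume \<omega>: "\<omega> \<in> space G"
    have sm1: "strict_mono (\<lambda>k. \<tau> k \<omega>)" and sm2: "strict_mono (\<lambda>k. \<sigma> k \<omega>)" using \<tau> \<sigma> \<omega> by auto
    show "strict_mono (\<lambda>k. \<tau> (\<sigma> k \<omega>) \<omega>)"
      using strict_mono_o[OF sm1 sm2] by (simp add: o_def)
    show "convergent (\<lambda>k. X (\<tau> (\<sigma> k \<omega>) \<omega>) \<omega>)"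
    proof (rule convergent_euclidean)
      fix b :: 'a assume "b \<in> Basis"
      then show "convergent (\<lambda>k. X (\<tau> (\<sigma> k \<omega>) \<omega>) \<omega> \<bullet> b)" using \<sigma>(2) \<omega> unfolding Y_def by blast
    qed
  qed
qed

lemma measurable_AE_eq_complete:
  fixes g h :: "'w \<Rightarrow> 'b::topological_space"
  assumes "complete_measure M" "h \<in> borel_measurable M" "AE x in M. g x = h x"
  shows "g \<in> borel_measurable M"
proof (rule measurableI)
  show "g x \<in> space borel" for x by simp
  fix A :: "'b set" assume "A \<in> sets borel"
  then have hA: "h -` A \<inter> space M \<in> sets M" using assms(2) by (rule measurable_sets[rotated])
  show "g -` A \<inter> space M \<in> sets M"
    by (rule complete_measure.in_sets_AE[OF assms(1) _ hA]) (use assms(3) in auto)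
qed

lemma measurable_AE_lim_complete:
  fixes f :: "nat \<Rightarrow> 'w \<Rightarrow> 'b::{banach, second_countable_topology}"
  assumes "complete_measure M" "\<And>n. f n \<in> borel_measurable M"
    and "AE x in M. (\<lambda>n. f n x) \<longlonglongrightarrow> g x"
  shows "g \<in> borel_measurable M"
proof (rule measurable_AE_eq_complete[OF assms(1)])
  show "(\<lambda>x. lim (\<lambda>n. f n x)) \<in> borel_measurable M" using assms(2) by measurable
  show "AE x in M. g x = lim (\<lambda>n. f n x)" using assms(3) by eventually_elim (simp add: limI)
qed

lemma conv_prob_subseq:
  fixes g :: "nat \<Rightarrow> 'w \<Rightarrow> ('d::finite) vect"
  assumes P: "prob_space M" and gm[measurable]: "\<And>n. g n \<in> borel_measurable M"
    and g0m[measurable]: "g0 \<in> borel_measurable M" and c: "conv_in_prob M g g0"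
  shows "\<exists>\<sigma>. strict_mono \<sigma> \<and> (AE \<omega> in M. (\<lambda>k. g (\<sigma> k) \<omega>) \<longlonglongrightarrow> g0 \<omega>)"
proof -
  interpret prob_space M by (rule P)
  have ex: "\<exists>N. \<forall>n\<ge>N. measure M {\<omega>\<in>space M. dist (g n \<omega>) (g0 \<omega>) > (1/2)^k} < (1/2)^k" for k
  proof -
    have "(\<lambda>n. measure M {\<omega>\<in>space M. dist (g n \<omega>) (g0 \<omega>) > (1/2)^k}) \<longlonglongrightarrow> 0"
      using c unfolding conv_in_prob_def by simp
    from order_tendstoD(2)[OF this, of "(1/2)^k"]
    show ?thesis by (simp add: eventually_sequentially)
  qed
  then have "\<forall>k. \<exists>N. \<forall>n\<ge>N. measure M {\<omega>\<in>space M. dist (g n \<omega>) (g0 \<omega>) > (1/2)^k} < (1/2)^k" by blast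
  then have "\<exists>N. \<forall>k. \<forall>n\<ge>N k. measure M {\<omega>\<in>space M. dist (g n \<omega>) (g0 \<omega>) > (1/2)^k} < (1/2)^k"
    by (rule choice)
  then obtain N where N: "\<And>k n. n \<ge> N k \<Longrightarrow> measure M {\<omega>\<in>space M. dist (g n \<omega>) (g0 \<omega>) > (1/2)^k} < (1/2)^k"
    by blast
  define \<sigma> where "\<sigma> k = k + (\<Sum>j\<le>k. N j)" for k
  have sm: "strict_mono \<sigma>"
    by (rule strict_monoI_Suc) (simp add: \<sigma>_def)
  have sN: "\<sigma> k \<ge> N k" for k
  proof -
    have "N k \<le> (\<Sum>j\<le>k. N j)" by (rule member_le_sum) auto
    then show ?thesis by (simp add: \<sigma>_def)
  qed
  define A where "A k = {\<omega>\<in>space M. dist (g (\<sigma> k) \<omega>) (g0 \<omega>) > (1/2)^k}" for k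
  have Am[measurable]: "A k \<in> sets M" for k
  proof -
    have f: "(\<lambda>\<omega>. dist (g (\<sigma> k) \<omega>) (g0 \<omega>)) \<in> borel_measurable M"
      by (rule borel_measurable_dist[OF gm g0m])
    have "A k = (\<lambda>\<omega>. dist (g (\<sigma> k) \<omega>) (g0 \<omega>)) -` {(1/2)^k<..} \<inter> space M"
      unfolding A_def by auto
    also have "\<dots> \<in> sets M" by (rule measurable_sets[OF f]) simp
    finally show ?thesis .
  qed
  have Ameas: "measure M (A k) \<le> (1/2)^k" for k
    using N[OF sN[of k]] unfolding A_def by simp
  have summ: "summable (\<lambda>k. measure M (A k))"
    by (rule summable_comparison_test[OF _ summable_geometric[of "1/2::real"]]) (use Ameas in auto)
  have AE1: "AE \<omega> in M. eventually (\<lambda>k. \<omega> \<in> space M - A k) sequentially"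
    by (rule borel_cantelli_AE1[OF Am _ summ]) (simp add: less_top[symmetric])
  have conv: "(\<lambda>k. g (\<sigma> k) \<omega>) \<longlonglongrightarrow> g0 \<omega>"
    if "eventually (\<lambda>k. \<omega> \<in> space M - A k) sequentially" for \<omega>
  proof -
    have ev: "eventually (\<lambda>k. norm (dist (g (\<sigma> k) \<omega>) (g0 \<omega>)) \<le> (1/2)^k) sequentially"
      using that by (rule eventually_mono) (auto simp: A_def)
    have "(\<lambda>k. dist (g (\<sigma> k) \<omega>) (g0 \<omega>)) \<longlonglongrightarrow> 0"
      by (rule Lim_null_comparison[OF ev]) (rule LIMSEQ_realpow_zero; simp)
    then show ?thesis by (rule tendsto_dist_iff[THEN iffD2])
  qed
  show ?thesis
    by (intro exI[of _ \<sigma>] conjI sm eventually_mono[OF AE1 conv])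
qed

lemma vle_def: "(x::real^'d) \<le> y \<longleftrightarrow> (\<forall>i. x$i \<le> y$i)" by (simp add: less_eq_vec_def)

lemma nonneg_vec_iff: "nonneg_vec x \<longleftrightarrow> 0 \<le> x" by (simp add: nonneg_vec_def vle_def)

locale mt =
  fixes M :: "'w measure" and H :: "nat \<Rightarrow> 'w measure" and T :: nat
    and A :: "('d::finite) mat set" and F :: "nat \<Rightarrow> 'w \<Rightarrow> 'd mat \<Rightarrow> 'd vect"
  assumes P: "prob_space M" and cpl: "complete_measure M"
    and sub: "\<forall>t\<le>T. subalgebra M (H t)"
    and filt: "\<forall>s t. s \<le> t \<longrightarrow> t \<le> T \<longrightarrow> sets (H s) \<subseteq> sets (H t)"
    and clA: "closed A" and cvA: "convex A" and cnA: "cone A" and neA: "A \<noteq> {}"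
    and rF: "randomF M A F" and kp: "KP M H A F T" and hn: "HN0 M H A F T"
begin

lemma zeroA: "0 \<in> A"
proof -
  obtain x where "x \<in> A" using neA by blast
  then have "0 *\<^sub>R x \<in> A" using cnA unfolding cone_def by blast
  then show ?thesis by simp
qed

lemma addA: "x \<in> A \<Longrightarrow> y \<in> A \<Longrightarrow> x + y \<in> A"
  using convex_cone[of A] cvA cnA by blast

lemma scaleA: "x \<in> A \<Longrightarrow> c \<ge> 0 \<Longrightarrow> c *\<^sub>R x \<in> A"
  using cnA unfolding cone_def by blast

lemma subA:
  assumes "x \<in> A" "y \<in> A" "- y \<in> A"
  shows "x - c *\<^sub>R y \<in> A"
proof (cases "c \<ge> 0")
  case True
  have "x + c *\<^sub>R (- y) \<in> A" by (rule addA[OF assms(1) scaleA[OF assms(3) True]])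
  then show ?thesis by simp
next
  case False
  have "x + (- c) *\<^sub>R y \<in> A" by (rule addA[OF assms(1) scaleA[OF assms(2)]]) (use False in simp)
  then show ?thesis by simp
qed

lemma space_H: "t \<le> T \<Longrightarrow> space (H t) = space M"
  using sub unfolding subalgebra_def by simp

lemma sets_H: "t \<le> T \<Longrightarrow> sets (H t) \<subseteq> sets M"
  using sub unfolding subalgebra_def by simp

lemma meas_H_M: "t \<le> T \<Longrightarrow> f \<in> H t \<rightarrow>\<^sub>M N \<Longrightarrow> f \<in> M \<rightarrow>\<^sub>M N"
  by (rule measurable_from_subalg[of M "H t"]) (use sub in simp_all)

lemma meas_H_mono:
  assumes st: "s \<le> t" "t \<le> T" and f: "f \<in> H s \<rightarrow>\<^sub>M N"
  shows "f \<in> H t \<rightarrow>\<^sub>M N"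
proof (rule measurableI)
  have sp: "space (H t) = space (H s)" using space_H[of s] space_H[of t] st by simp
  show "x \<in> space (H t) \<Longrightarrow> f x \<in> space N" for x using measurable_space[OF f, of x] sp by simp
  fix B assume "B \<in> sets N"
  then have "f -` B \<inter> space (H s) \<in> sets (H s)" by (rule measurable_sets[OF f])
  moreover have "sets (H s) \<subseteq> sets (H t)" using filt st by simp
  ultimately show "f -` B \<inter> space (H t) \<in> sets (H t)" using sp by auto
qed

lemma Fmeas_a: "(\<lambda>\<omega>. F t \<omega> a) \<in> borel_measurable M"
  using rF unfolding randomF_def by simp

lemma AE_classF: "AE \<omega> in M. \<forall>t. F t \<omega> \<in> classF A"
proof -
  have "\<forall>t. AE \<omega> in M. F t \<omega> \<in> classF A" using rF unfolding randomF_def by simp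
  then show ?thesis by (simp add: AE_all_countable)
qed

lemma classF_hom: "f \<in> classF A \<Longrightarrow> c \<ge> 0 \<Longrightarrow> f (c *\<^sub>R a) = c *\<^sub>R f a"
  unfolding classF_def by blast

lemma classF_0: "f \<in> classF A \<Longrightarrow> f 0 = 0"
  using classF_hom[of f 0 0] by simp

lemma classF_cont: "f \<in> classF A \<Longrightarrow> continuous_on UNIV f"
  unfolding classF_def by blast

lemma classF_super:
  assumes "f \<in> classF A" "c \<ge> 0" "b \<ge> 0" "a \<in> A" "a' \<in> A"
  shows "c *\<^sub>R f a + b *\<^sub>R f a' \<le> f (c *\<^sub>R a + b *\<^sub>R a')"
proof -
  have "nonneg_vec (f (c *\<^sub>R a + b *\<^sub>R a') - (c *\<^sub>R f a + b *\<^sub>R f a'))"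
    using assms unfolding classF_def by blast
  then show ?thesis by (simp add: nonneg_vec_def vle_def)
qed

lemma classF_tendsto:
  assumes "f \<in> classF A" "X \<longlonglongrightarrow> l"
  shows "(\<lambda>n. f (X n)) \<longlonglongrightarrow> f l"
  using continuous_on_tendsto_compose[OF classF_cont[OF assms(1)] assms(2)] by simp

lemma classF_shift:
  assumes f: "f \<in> classF A" and x: "x \<in> A" and y: "y \<in> A" "- y \<in> A" and odd: "f (- y) = - f y"
  shows "f x - c *\<^sub>R f y \<le> f (x - c *\<^sub>R y)"
proof (cases "c \<ge> 0")
  case True
  have "1 *\<^sub>R f x + c *\<^sub>R f (- y) \<le> f (1 *\<^sub>R x + c *\<^sub>R (- y))"
    by (rule classF_super[OF f _ True x y(2)]) simp
  then show ?thesis using odd by simp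
next
  case False
  have "1 *\<^sub>R f x + (- c) *\<^sub>R f y \<le> f (1 *\<^sub>R x + (- c) *\<^sub>R y)"
    by (rule classF_super[OF f _ _ x y(1)]) (use False in simp_all)
  then show ?thesis by simp
qed

lemma L0A_M: "t \<le> T \<Longrightarrow> \<eta> \<in> L0A M H A t \<Longrightarrow> \<eta> \<in> borel_measurable M"
  unfolding L0A_def using meas_H_M by blast

text \<open>Caratheodory-type measurability\<close>
lemma F_meas:
  assumes eta[measurable]: "\<eta> \<in> borel_measurable M"
  shows "(\<lambda>\<omega>. F t \<omega> (\<eta> \<omega>)) \<in> borel_measurable M"
proof -
  obtain D :: "'d mat set" where D: "countable D" "D \<noteq> {}"
    "\<And>U. open U \<Longrightarrow> U \<noteq> {} \<Longrightarrow> \<exists>y\<in>D. y \<in> U"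
    using countable_dense_exists by blast
  define e where "e = from_nat_into D"
  have close: "\<exists>n. dist (e n) x < r" if "r > 0" for x r
  proof -
    have "ball x r \<noteq> {}" using that by simp
    then obtain y where "y \<in> D" "y \<in> ball x r" using D(3)[of "ball x r"] by blast
    moreover obtain n where "e n = y" using from_nat_into_surj[OF D(1) \<open>y \<in> D\<close>] e_def by blast
    ultimately show ?thesis by (auto simp: dist_commute)
  qed
  define N where "N k \<omega> = (LEAST n. dist (e n) (\<eta> \<omega>) < 1 / Suc k)" for k \<omega>
  have Nm: "N k \<in> M \<rightarrow>\<^sub>M count_space UNIV" for k
    unfolding N_def by measurable
  have Nd: "dist (e (N k \<omega>)) (\<eta> \<omega>) < 1 / Suc k" for k \<omega>
  proof -
    have "\<exists>n. dist (e n) (\<eta> \<omega>) < 1 / Suc k" by (rule close) simp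
    then show ?thesis unfolding N_def by (rule LeastI_ex)
  qed
  have conv: "(\<lambda>k. e (N k \<omega>)) \<longlonglongrightarrow> \<eta> \<omega>" for \<omega>
  proof (rule tendsto_dist_iff[THEN iffD2])
    have "(\<lambda>k. 1 / real (Suc k)) \<longlonglongrightarrow> 0" by (rule LIMSEQ_Suc[OF lim_const_over_n])
    then show "(\<lambda>k. dist (e (N k \<omega>)) (\<eta> \<omega>)) \<longlonglongrightarrow> 0"
      by (rule Lim_null_comparison[rotated]) (intro always_eventually allI less_imp_le, use Nd in simp)
  qed
  define f where "f k \<omega> = F t \<omega> (e (N k \<omega>))" for k \<omega>
  have fm: "f k \<in> borel_measurable M" for k
    unfolding f_def by (rule measurable_compose_countable[where f="\<lambda>i \<omega>. F t \<omega> (e i)"]) (use Fmeas_a Nm in auto)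
  have "AE \<omega> in M. (\<lambda>k. f k \<omega>) \<longlonglongrightarrow> F t \<omega> (\<eta> \<omega>)"
    using AE_classF
  proof eventually_elim
    case (elim \<omega>)
    then show ?case unfolding f_def by (intro classF_tendsto[OF _ conv]) blast
  qed
  then show ?thesis by (rule measurable_AE_lim_complete[OF cpl fm])
qed

end

context mt begin

definition SF :: "nat \<Rightarrow> (nat \<Rightarrow> 'w \<Rightarrow> 'd mat) \<Rightarrow> 'w \<Rightarrow> 'd vect" where
  "SF s \<eta> \<omega> = (\<Sum>t\<in>{s..T}. F t \<omega> (\<eta> t \<omega>))"

definition adm :: "nat \<Rightarrow> (nat \<Rightarrow> 'w \<Rightarrow> 'd mat) \<Rightarrow> bool" where
  "adm s \<eta> \<longleftrightarrow> (\<forall>t\<in>{s..T}. \<eta> t \<in> L0A M H A t)"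

definition Cl :: "nat \<Rightarrow> bool" where
  "Cl s \<longleftrightarrow> (\<forall>(h::nat \<Rightarrow> 'w \<Rightarrow> 'd vect) hl (\<eta>::nat \<Rightarrow> nat \<Rightarrow> 'w \<Rightarrow> 'd mat).
     (\<forall>n. adm s (\<eta> n)) \<longrightarrow> (AE \<omega> in M. \<forall>n. h n \<omega> \<le> SF s (\<eta> n) \<omega>) \<longrightarrow>
     (AE \<omega> in M. (\<lambda>n. h n \<omega>) \<longlonglongrightarrow> hl \<omega>) \<longrightarrow>
     (\<exists>\<eta>'. adm s \<eta>' \<and> (AE \<omega> in M. hl \<omega> \<le> SF s \<eta>' \<omega>)))"

definition Dm :: "nat \<Rightarrow> nat \<Rightarrow> bool" where
  "Dm s m \<longleftrightarrow> (\<forall>(h::nat \<Rightarrow> 'w \<Rightarrow> 'd vect) hl (\<eta>::nat \<Rightarrow> nat \<Rightarrow> 'w \<Rightarrow> 'd mat).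
     (\<forall>n. adm s (\<eta> n)) \<longrightarrow> (AE \<omega> in M. \<forall>n. h n \<omega> \<le> SF s (\<eta> n) \<omega>) \<longrightarrow>
     (AE \<omega> in M. (\<lambda>n. h n \<omega>) \<longlonglongrightarrow> hl \<omega>) \<longrightarrow>
     (AE \<omega> in M. convergent (\<lambda>n. \<eta> n s \<omega>) \<or> dim (range (\<lambda>n. \<eta> n s \<omega>)) \<le> m) \<longrightarrow>
     (\<exists>\<eta>'. adm s \<eta>' \<and> (AE \<omega> in M. hl \<omega> \<le> SF s \<eta>' \<omega>)))"

lemma SF_split: "s \<le> T \<Longrightarrow> SF s \<eta> \<omega> = F s \<omega> (\<eta> s \<omega>) + SF (Suc s) \<eta> \<omega>"
  unfolding SF_def by (simp add: Icc_eq_insert_lb_nat)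

lemma SF_top: "SF (Suc T) \<eta> \<omega> = 0"
  unfolding SF_def by simp

lemma adm_Suc: "adm s \<eta> \<Longrightarrow> adm (Suc s) \<eta>"
  unfolding adm_def by auto

lemma L0A_H: "\<eta> \<in> L0A M H A t \<Longrightarrow> \<eta> \<in> borel_measurable (H t)"
  unfolding L0A_def by simp

lemma L0A_A: "\<eta> \<in> L0A M H A t \<Longrightarrow> \<omega> \<in> space M \<Longrightarrow> \<eta> \<omega> \<in> A"
  unfolding L0A_def by simp

lemma L0A_I: "\<eta> \<in> borel_measurable (H t) \<Longrightarrow> (\<And>\<omega>. \<omega> \<in> space M \<Longrightarrow> \<eta> \<omega> \<in> A) \<Longrightarrow> \<eta> \<in> L0A M H A t"
  unfolding L0A_def by simp

lemma reidx:
  fixes \<tau> :: "nat \<Rightarrow> 'w \<Rightarrow> nat"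
  assumes sT: "s \<le> T" and \<tau>m: "\<And>k. \<tau> k \<in> H s \<rightarrow>\<^sub>M count_space UNIV"
    and sm: "\<And>\<omega>. \<omega> \<in> space M \<Longrightarrow> strict_mono (\<lambda>k. \<tau> k \<omega>)"
    and ad: "\<forall>n. adm s (\<eta> n)"
    and ineq: "AE \<omega> in M. \<forall>n. h n \<omega> \<le> SF s (\<eta> n) \<omega>"
    and cv: "AE \<omega> in M. (\<lambda>n. h n \<omega>) \<longlonglongrightarrow> hl \<omega>"
  shows "(\<forall>k. adm s (\<lambda>t \<omega>. \<eta> (\<tau> k \<omega>) t \<omega>))"
    "(AE \<omega> in M. \<forall>k. h (\<tau> k \<omega>) \<omega> \<le> SF s (\<lambda>t \<omega>. \<eta> (\<tau> k \<omega>) t \<omega>) \<omega>)"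
    "(AE \<omega> in M. (\<lambda>k. h (\<tau> k \<omega>) \<omega>) \<longlonglongrightarrow> hl \<omega>)"
proof -
  show "\<forall>k. adm s (\<lambda>t \<omega>. \<eta> (\<tau> k \<omega>) t \<omega>)"
  proof (intro allI, unfold adm_def, intro ballI)
    fix k t assume t: "t \<in> {s..T}"
    have m: "\<eta> i t \<in> borel_measurable (H t)" for i using ad t unfolding adm_def L0A_def by blast
    have tm: "\<tau> k \<in> H t \<rightarrow>\<^sub>M count_space UNIV" using meas_H_mono[OF _ _ \<tau>m[of k]] t by simp
    show "(\<lambda>\<omega>. \<eta> (\<tau> k \<omega>) t \<omega>) \<in> L0A M H A t"
    proof (rule L0A_I)
      show "(\<lambda>\<omega>. \<eta> (\<tau> k \<omega>) t \<omega>) \<in> borel_measurable (H t)"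
        by (rule measurable_compose_countable[where f="\<lambda>i. \<eta> i t"]) (use m tm in simp_all)
      fix \<omega> assume "\<omega> \<in> space M"
      then show "\<eta> (\<tau> k \<omega>) t \<omega> \<in> A" using ad t unfolding adm_def L0A_def by blast
    qed
  qed
  show "AE \<omega> in M. \<forall>k. h (\<tau> k \<omega>) \<omega> \<le> SF s (\<lambda>t \<omega>. \<eta> (\<tau> k \<omega>) t \<omega>) \<omega>"
    using ineq by (rule eventually_mono) (simp add: SF_def)
  show "AE \<omega> in M. (\<lambda>k. h (\<tau> k \<omega>) \<omega>) \<longlonglongrightarrow> hl \<omega>"
    using cv AE_space
  proof (rule eventually_elim2)
    fix \<omega> assume c: "(\<lambda>n. h n \<omega>) \<longlonglongrightarrow> hl \<omega>" and "\<omega> \<in> space M"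
    then have "strict_mono (\<lambda>k. \<tau> k \<omega>)" using sm by simp
    from LIMSEQ_subseq_LIMSEQ[OF c this] show "(\<lambda>k. h (\<tau> k \<omega>) \<omega>) \<longlonglongrightarrow> hl \<omega>" by (simp add: o_def)
  qed
qed

lemma Cl_top: "Cl (Suc T)"
  unfolding Cl_def
proof (intro allI impI)
  fix h hl and \<eta> :: "nat \<Rightarrow> nat \<Rightarrow> 'w \<Rightarrow> 'd mat"
  assume ineq: "AE \<omega> in M. \<forall>n. h n \<omega> \<le> SF (Suc T) (\<eta> n) \<omega>"
    and cv: "AE \<omega> in M. (\<lambda>n. h n \<omega>) \<longlonglongrightarrow> hl \<omega>"
  have "AE \<omega> in M. hl \<omega> \<le> SF (Suc T) (\<eta> 0) \<omega>"
    using ineq cv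
  proof (rule eventually_elim2)
    fix \<omega> assume i: "\<forall>n. h n \<omega> \<le> SF (Suc T) (\<eta> n) \<omega>" and c: "(\<lambda>n. h n \<omega>) \<longlonglongrightarrow> hl \<omega>"
    show "hl \<omega> \<le> SF (Suc T) (\<eta> 0) \<omega>"
      unfolding SF_top vle_def
    proof
      fix j
      have "(\<lambda>n. h n \<omega> $ j) \<longlonglongrightarrow> hl \<omega> $ j" by (rule tendsto_vec_nth[OF c])
      moreover have "h n \<omega> $ j \<le> 0" for n using i unfolding SF_top vle_def by simp
      ultimately show "hl \<omega> $ j \<le> 0 $ j" by (simp add: LIMSEQ_le_const2)
    qed
  qed
  moreover have "adm (Suc T) (\<eta> 0)" unfolding adm_def by simp
  ultimately show "\<exists>\<eta>'. adm (Suc T) \<eta>' \<and> (AE \<omega> in M. hl \<omega> \<le> SF (Suc T) \<eta>' \<omega>)" by blast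
qed

end

context mt begin

lemma lim_in_L0A:
  assumes sT: "s \<le> T" and m: "\<And>n. X n \<in> borel_measurable (H s)"
  shows "(\<lambda>\<omega>. if lim (\<lambda>n. X n \<omega>) \<in> A then lim (\<lambda>n. X n \<omega>) else 0) \<in> L0A M H A s"
proof (rule L0A_I)
  have lm: "(\<lambda>\<omega>. lim (\<lambda>n. X n \<omega>)) \<in> borel_measurable (H s)"
    by (rule borel_measurable_lim_metric[OF m])
  have p: "Measurable.pred (H s) (\<lambda>\<omega>. lim (\<lambda>n. X n \<omega>) \<in> A)"
    by (rule pred_sets2[OF borel_closed[OF clA] lm])
  show "(\<lambda>\<omega>. if lim (\<lambda>n. X n \<omega>) \<in> A then lim (\<lambda>n. X n \<omega>) else 0) \<in> borel_measurable (H s)"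
    using lm p by measurable
  show "\<And>\<omega>. (if lim (\<lambda>n. X n \<omega>) \<in> A then lim (\<lambda>n. X n \<omega>) else 0) \<in> A"
    using zeroA by simp
qed

lemma lim_in_A:
  assumes "\<And>n. X n \<in> A" "convergent X"
  shows "(if lim X \<in> A then lim X else 0) = lim X" "X \<longlonglongrightarrow> lim X"
proof -
  show c: "X \<longlonglongrightarrow> lim X" using assms(2) by (simp add: convergent_LIMSEQ_iff)
  have "lim X \<in> A" by (rule closed_sequentially[OF clA assms(1) c])
  then show "(if lim X \<in> A then lim X else 0) = lim X" by simp
qed

lemma D0:
  assumes sT: "s \<le> T" and C: "Cl (Suc s)"
  shows "Dm s 0"
  unfolding Dm_def
proof (intro allI impI)
  fix h hl and \<eta> :: "nat \<Rightarrow> nat \<Rightarrow> 'w \<Rightarrow> 'd mat"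
  assume ad: "\<forall>n. adm s (\<eta> n)" and ineq: "AE \<omega> in M. \<forall>n. h n \<omega> \<le> SF s (\<eta> n) \<omega>"
    and cv: "AE \<omega> in M. (\<lambda>n. h n \<omega>) \<longlonglongrightarrow> hl \<omega>"
    and dc: "AE \<omega> in M. convergent (\<lambda>n. \<eta> n s \<omega>) \<or> dim (range (\<lambda>n. \<eta> n s \<omega>)) \<le> 0"
  have cvg: "AE \<omega> in M. convergent (\<lambda>n. \<eta> n s \<omega>)"
    using dc
  proof (rule eventually_mono)
    fix \<omega> assume d: "convergent (\<lambda>n. \<eta> n s \<omega>) \<or> dim (range (\<lambda>n. \<eta> n s \<omega>)) \<le> 0"
    show "convergent (\<lambda>n. \<eta> n s \<omega>)"
    proof (cases "convergent (\<lambda>n. \<eta> n s \<omega>)")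
      case False
      with d have "dim (range (\<lambda>n. \<eta> n s \<omega>)) = 0" by simp
      then have "range (\<lambda>n. \<eta> n s \<omega>) \<subseteq> {0}" by simp
      then have "(\<lambda>n. \<eta> n s \<omega>) = (\<lambda>n. 0)" by auto
      then show ?thesis by (simp add: convergent_const)
    qed simp
  qed
  have sL: "\<eta> n s \<in> L0A M H A s" for n using ad sT unfolding adm_def by simp
  have \<eta>m: "\<eta> n s \<in> borel_measurable (H s)" for n using sL by (rule L0A_H)
  define l' where "l' \<omega> = (if lim (\<lambda>n. \<eta> n s \<omega>) \<in> A then lim (\<lambda>n. \<eta> n s \<omega>) else 0)" for \<omega>
  have l'L: "l' \<in> L0A M H A s" unfolding l'_def by (rule lim_in_L0A[OF sT \<eta>m])
  have lconv: "AE \<omega> in M. (\<lambda>n. \<eta> n s \<omega>) \<longlonglongrightarrow> l' \<omega>"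
    using cvg AE_space
  proof (rule eventually_elim2)
    fix \<omega> assume c: "convergent (\<lambda>n. \<eta> n s \<omega>)" and w: "\<omega> \<in> space M"
    have iA: "\<eta> n s \<omega> \<in> A" for n using L0A_A[OF sL w] .
    show "(\<lambda>n. \<eta> n s \<omega>) \<longlonglongrightarrow> l' \<omega>" unfolding l'_def lim_in_A[OF iA c] by (rule lim_in_A[OF iA c])
  qed
  define h2 where "h2 n \<omega> = h n \<omega> - F s \<omega> (\<eta> n s \<omega>)" for n \<omega>
  have ineq2: "AE \<omega> in M. \<forall>n. h2 n \<omega> \<le> SF (Suc s) (\<eta> n) \<omega>"
    using ineq
  proof (rule eventually_mono)
    fix \<omega> assume i: "\<forall>n. h n \<omega> \<le> SF s (\<eta> n) \<omega>"
    show "\<forall>n. h2 n \<omega> \<le> SF (Suc s) (\<eta> n) \<omega>"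
      using i unfolding h2_def SF_split[OF sT] vle_def by (simp add: algebra_simps)
  qed
  have adm2: "\<forall>n. adm (Suc s) (\<eta> n)" using ad adm_Suc by blast
  have cv2: "AE \<omega> in M. (\<lambda>n. h2 n \<omega>) \<longlonglongrightarrow> hl \<omega> - F s \<omega> (l' \<omega>)"
    using cv lconv AE_classF
  proof eventually_elim
    case (elim \<omega>)
    note c = elim(1) and l = elim(2) and f = elim(3)
    show "(\<lambda>n. h2 n \<omega>) \<longlonglongrightarrow> hl \<omega> - F s \<omega> (l' \<omega>)"
      unfolding h2_def by (intro tendsto_diff c classF_tendsto[OF _ l]) (use f in blast)
  qed
  obtain \<eta>'' where \<eta>'': "adm (Suc s) \<eta>''" "AE \<omega> in M. hl \<omega> - F s \<omega> (l' \<omega>) \<le> SF (Suc s) \<eta>'' \<omega>"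
    using C[unfolded Cl_def, rule_format, OF adm2[rule_format] ineq2 cv2] by blast
  define \<eta>' where "\<eta>' t = (if t = s then l' else \<eta>'' t)" for t
  have adm': "adm s \<eta>'"
    unfolding adm_def
  proof
    fix t assume t: "t \<in> {s..T}"
    show "\<eta>' t \<in> L0A M H A t"
    proof (cases "t = s")
      case True then show ?thesis using l'L by (simp add: \<eta>'_def)
    next
      case False
      then have "t \<in> {Suc s..T}" using t by auto
      then show ?thesis using \<eta>''(1) False unfolding adm_def \<eta>'_def by simp
    qed
  qed
  have SFe: "SF s \<eta>' \<omega> = F s \<omega> (l' \<omega>) + SF (Suc s) \<eta>'' \<omega>" for \<omega>
  proof -
    have "SF (Suc s) \<eta>' \<omega> = SF (Suc s) \<eta>'' \<omega>" unfolding SF_def by (rule sum.cong) (auto simp: \<eta>'_def)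
    then show ?thesis using SF_split[OF sT, of \<eta>'] by (simp add: \<eta>'_def)
  qed
  have "AE \<omega> in M. hl \<omega> \<le> SF s \<eta>' \<omega>"
    using \<eta>''(2)
  proof (rule eventually_mono)
    fix \<omega> assume "hl \<omega> - F s \<omega> (l' \<omega>) \<le> SF (Suc s) \<eta>'' \<omega>"
    then show "hl \<omega> \<le> SF s \<eta>' \<omega>" unfolding SFe vle_def by (simp add: algebra_simps)
  qed
  with adm' show "\<exists>\<eta>'. adm s \<eta>' \<and> (AE \<omega> in M. hl \<omega> \<le> SF s \<eta>' \<omega>)" by blast
qed

lemma Dfull:
  assumes D: "Dm s DIM('d mat)"
  shows "Cl s"
  unfolding Cl_def
proof (intro allI impI)
  fix h hl and \<eta> :: "nat \<Rightarrow> nat \<Rightarrow> 'w \<Rightarrow> 'd mat"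
  assume a1: "\<forall>n. adm s (\<eta> n)" and a2: "AE \<omega> in M. \<forall>n. h n \<omega> \<le> SF s (\<eta> n) \<omega>"
    and a3: "AE \<omega> in M. (\<lambda>n. h n \<omega>) \<longlonglongrightarrow> hl \<omega>"
  have a4: "AE \<omega> in M. convergent (\<lambda>n. \<eta> n s \<omega>) \<or> dim (range (\<lambda>n. \<eta> n s \<omega>)) \<le> DIM('d mat)"
    by (intro always_eventually allI disjI2 dim_subset_UNIV)
  show "\<exists>\<eta>'. adm s \<eta>' \<and> (AE \<omega> in M. hl \<omega> \<le> SF s \<eta>' \<omega>)"
    by (rule D[unfolded Dm_def, rule_format, OF a1[rule_format] a2 a3 a4])
qed

end

lemma vle_scale: "0 \<le> c \<Longrightarrow> (x::real^'d) \<le> y \<Longrightarrow> c *\<^sub>R x \<le> c *\<^sub>R y"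
  by (simp add: vle_def mult_left_mono)

lemma vle_trans: "(x::real^'d) \<le> y \<Longrightarrow> y \<le> z \<Longrightarrow> x \<le> z"
  by (rule order.trans)

lemma dim_drop:
  fixes u :: "'a::euclidean_space"
  assumes u: "u \<in> span R" "u \<bullet> u \<noteq> 0" and S: "S \<subseteq> span R" "\<And>x. x \<in> S \<Longrightarrow> x \<bullet> u = 0"
  shows "dim S < dim R"
proof (rule dim_psubset)
  have "span S \<subseteq> span R" by (rule span_minimal[OF S(1) subspace_span])
  moreover have sS: "span S \<subseteq> {x. x \<bullet> u = 0}"
    by (rule span_minimal[OF _ subspace_hyperplane2]) (use S(2) in blast)
  moreover have "u \<notin> span S" using sS u(2) by blast
  ultimately show "span S \<subset> span R" using u(1) by blast
qed

context mt begin

lemma inN_zero: "t \<le> T \<Longrightarrow> inN M H A F t (\<lambda>\<omega>. 0)"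
  unfolding inN_def
proof (intro bexI)
  show "(\<lambda>\<omega>. 0) \<in> L0A M H A t" by (rule L0A_I) (simp_all add: zeroA)
  show "AE \<omega> in M. 0 = F t \<omega> 0" using AE_classF by (rule eventually_mono) (simp add: classF_0)
qed

lemma inN_F: "\<eta> \<in> L0A M H A t \<Longrightarrow> inN M H A F t (\<lambda>\<omega>. F t \<omega> (\<eta> \<omega>))"
  unfolding inN_def by (intro bexI[of _ \<eta>]) simp_all

lemma KP_apply:
  assumes sT: "s \<le> T" and etL: "\<eta>t \<in> L0A M H A s" and ad: "adm (Suc s) \<eta>''"
    and ie: "AE \<omega> in M. - F s \<omega> (\<eta>t \<omega>) \<le> SF (Suc s) \<eta>'' \<omega>"
  shows "AE \<omega> in M. F s \<omega> (\<eta>t \<omega>) + SF (Suc s) \<eta>'' \<omega> = 0"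
    and "AE \<omega> in M. F s \<omega> (- \<eta>t \<omega>) = - F s \<omega> (\<eta>t \<omega>)"
    and "AE \<omega> in M. - \<eta>t \<omega> \<in> A"
    and "\<And>t. t \<in> {Suc s..T} \<Longrightarrow> AE \<omega> in M. F t \<omega> (- \<eta>'' t \<omega>) = - F t \<omega> (\<eta>'' t \<omega>)"
    and "\<And>t. t \<in> {Suc s..T} \<Longrightarrow> AE \<omega> in M. - \<eta>'' t \<omega> \<in> A"
proof -
  define \<xi>1 where "\<xi>1 t = (\<lambda>\<omega>. if t = s then F s \<omega> (\<eta>t \<omega>) else 0)" for t
  define \<xi>2 where "\<xi>2 t = (\<lambda>\<omega>. if s < t then F t \<omega> (\<eta>'' t \<omega>) else 0)" for t
  have i1: "inNproc M H A F T \<xi>1"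
    unfolding inNproc_def
  proof (intro allI impI)
    fix t assume "t \<le> T"
    show "inN M H A F t (\<xi>1 t)"
    proof (cases "t = s")
      case True then show ?thesis using inN_F[OF etL] by (simp add: \<xi>1_def)
    next
      case False then show ?thesis using inN_zero[OF \<open>t \<le> T\<close>] by (simp add: \<xi>1_def)
    qed
  qed
  have i2: "inNproc M H A F T \<xi>2"
    unfolding inNproc_def
  proof (intro allI impI)
    fix t assume "t \<le> T"
    show "inN M H A F t (\<xi>2 t)"
    proof (cases "s < t")
      case True
      then have "\<eta>'' t \<in> L0A M H A t" using ad \<open>t \<le> T\<close> unfolding adm_def by simp
      then show ?thesis using inN_F True by (simp add: \<xi>2_def)
    next
      case False then show ?thesis using inN_zero[OF \<open>t \<le> T\<close>] by (simp add: \<xi>2_def)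
    qed
  qed
  have V1: "V \<xi>1 T \<omega> = F s \<omega> (\<eta>t \<omega>)" for \<omega>
    unfolding V_def \<xi>1_def using sT by (simp add: sum.delta)
  have V2: "V \<xi>2 T \<omega> = SF (Suc s) \<eta>'' \<omega>" for \<omega>
  proof -
    have "V \<xi>2 T \<omega> = (\<Sum>t\<in>{x\<in>{..T}. s < x}. F t \<omega> (\<eta>'' t \<omega>))"
      unfolding V_def \<xi>2_def by (rule sum.inter_filter[symmetric]) simp
    also have "{x\<in>{..T}. s < x} = {Suc s..T}" by auto
    finally show ?thesis unfolding SF_def .
  qed
  have nn: "AE \<omega> in M. nonneg_vec (V \<xi>1 T \<omega> + V \<xi>2 T \<omega>)"
    using ie
  proof (rule eventually_mono)
    fix \<omega> assume a: "- F s \<omega> (\<eta>t \<omega>) \<le> SF (Suc s) \<eta>'' \<omega>"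
    show "nonneg_vec (V \<xi>1 T \<omega> + V \<xi>2 T \<omega>)" unfolding V1 V2 nonneg_vec_def
    proof
      fix i have "(- F s \<omega> (\<eta>t \<omega>)) $ i \<le> SF (Suc s) \<eta>'' \<omega> $ i" using a vle_def by blast
      then show "0 \<le> (F s \<omega> (\<eta>t \<omega>) + SF (Suc s) \<eta>'' \<omega>) $ i" by simp
    qed
  qed
  have nn': "AE \<omega> in M. nonneg_vec (V \<xi>2 T \<omega> + V \<xi>1 T \<omega>)"
    using nn by (simp add: add.commute)
  have k1: "inN0proc M H A F T \<xi>1 \<and> (AE \<omega> in M. V \<xi>1 T \<omega> + V \<xi>2 T \<omega> = 0)"
    by (rule kp[unfolded KP_def, rule_format, OF i1 i2 nn])
  have k2: "inN0proc M H A F T \<xi>2"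
    using kp[unfolded KP_def, rule_format, OF i2 i1 nn'] by blast
  show "AE \<omega> in M. F s \<omega> (\<eta>t \<omega>) + SF (Suc s) \<eta>'' \<omega> = 0"
    using k1 by (simp add: V1 V2)
  have "inN0 M H A F s (\<xi>1 s)" using k1 sT unfolding inN0proc_def by blast
  then have "inN0 M H A F s (\<lambda>\<omega>. F s \<omega> (\<eta>t \<omega>))" by (simp add: \<xi>1_def)
  from hn[unfolded HN0_def, rule_format, OF sT etL this]
  show "AE \<omega> in M. F s \<omega> (- \<eta>t \<omega>) = - F s \<omega> (\<eta>t \<omega>)" "AE \<omega> in M. - \<eta>t \<omega> \<in> A" by blast+
  fix t assume t: "t \<in> {Suc s..T}"
  have "inN0 M H A F t (\<xi>2 t)" using k2 t unfolding inN0proc_def by simp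
  then have "inN0 M H A F t (\<lambda>\<omega>. F t \<omega> (\<eta>'' t \<omega>))" using t by (simp add: \<xi>2_def)
  moreover have "\<eta>'' t \<in> L0A M H A t" using ad t unfolding adm_def by simp
  moreover have "t \<le> T" using t by simp
  ultimately have "(AE \<omega> in M. F t \<omega> (- \<eta>'' t \<omega>) = - F t \<omega> (\<eta>'' t \<omega>)) \<and> (AE \<omega> in M. - \<eta>'' t \<omega> \<in> A)"
    using hn[unfolded HN0_def, rule_format] by blast
  then show "AE \<omega> in M. F t \<omega> (- \<eta>'' t \<omega>) = - F t \<omega> (\<eta>'' t \<omega>)" "AE \<omega> in M. - \<eta>'' t \<omega> \<in> A" by blast+
qed

end

context mt begin

lemma SF_scale:
  assumes "\<forall>t. F t \<omega> \<in> classF A" "a \<omega> \<ge> 0"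
  shows "SF s (\<lambda>t \<omega>'. a \<omega>' *\<^sub>R \<eta> t \<omega>') \<omega> = a \<omega> *\<^sub>R SF s \<eta> \<omega>"
  unfolding SF_def scaleR_sum_right
  by (rule sum.cong) (use assms classF_hom in auto)

lemma symm_fix:
  assumes sT: "s \<le> T" and ad: "adm s \<zeta>"
    and odd: "\<And>t. t \<in> {s..T} \<Longrightarrow> AE \<omega> in M. F t \<omega> (- \<zeta> t \<omega>) = - F t \<omega> (\<zeta> t \<omega>)"
    and neg: "\<And>t. t \<in> {s..T} \<Longrightarrow> AE \<omega> in M. - \<zeta> t \<omega> \<in> A"
    and z: "AE \<omega> in M. SF s \<zeta> \<omega> = 0"
  defines "\<zeta>' \<equiv> \<lambda>t \<omega>. if - \<zeta> t \<omega> \<in> A then \<zeta> t \<omega> else 0"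
  shows "adm s \<zeta>'"
    and "\<And>t \<omega>. t \<in> {s..T} \<Longrightarrow> \<omega> \<in> space M \<Longrightarrow> - \<zeta>' t \<omega> \<in> A"
    and "AE \<omega> in M. \<forall>t\<in>{s..T}. \<zeta>' t \<omega> = \<zeta> t \<omega>"
    and "AE \<omega> in M. \<forall>t\<in>{s..T}. F t \<omega> (- \<zeta>' t \<omega>) = - F t \<omega> (\<zeta>' t \<omega>)"
    and "AE \<omega> in M. SF s \<zeta>' \<omega> = 0"
proof -
  show eq: "AE \<omega> in M. \<forall>t\<in>{s..T}. \<zeta>' t \<omega> = \<zeta> t \<omega>"
  proof (rule AE_finite_allI)
    fix t assume t: "t \<in> {s..T}"
    show "AE \<omega> in M. \<zeta>' t \<omega> = \<zeta> t \<omega>" using neg[OF t] by (rule eventually_mono) (simp add: \<zeta>'_def)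
  qed simp
  have od: "AE \<omega> in M. \<forall>t\<in>{s..T}. F t \<omega> (- \<zeta> t \<omega>) = - F t \<omega> (\<zeta> t \<omega>)"
    by (rule AE_finite_allI) (use odd in simp_all)
  show "AE \<omega> in M. \<forall>t\<in>{s..T}. F t \<omega> (- \<zeta>' t \<omega>) = - F t \<omega> (\<zeta>' t \<omega>)"
    using eq od by eventually_elim simp
  show "AE \<omega> in M. SF s \<zeta>' \<omega> = 0"
    using eq z
  proof eventually_elim
    case (elim \<omega>)
    have "SF s \<zeta>' \<omega> = SF s \<zeta> \<omega>" unfolding SF_def by (rule sum.cong) (use elim(1) in simp_all)
    then show ?case using elim(2) by simp
  qed
  show "adm s \<zeta>'"
    unfolding adm_def
  proof
    fix t assume t: "t \<in> {s..T}"
    have zL: "\<zeta> t \<in> L0A M H A t" using ad t unfolding adm_def by simp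
    have zm[measurable]: "\<zeta> t \<in> borel_measurable (H t)" using zL by (rule L0A_H)
    have cA[measurable]: "A \<in> sets borel" by (rule borel_closed[OF clA])
    show "\<zeta>' t \<in> L0A M H A t"
    proof (rule L0A_I)
      show "\<zeta>' t \<in> borel_measurable (H t)" unfolding \<zeta>'_def by measurable
      fix \<omega> assume "\<omega> \<in> space M"
      then show "\<zeta>' t \<omega> \<in> A" using L0A_A[OF zL] zeroA by (simp add: \<zeta>'_def)
    qed
  qed
  fix t \<omega> assume "t \<in> {s..T}" "\<omega> \<in> space M"
  then show "- \<zeta>' t \<omega> \<in> A" using zeroA by (simp add: \<zeta>'_def)
qed

lemma shift:
  assumes sT: "s \<le> T" and ad: "adm s \<eta>" and adz: "adm s \<zeta>'"
    and negA: "\<And>t \<omega>. t \<in> {s..T} \<Longrightarrow> \<omega> \<in> space M \<Longrightarrow> - \<zeta>' t \<omega> \<in> A"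
    and \<beta>m: "\<beta> \<in> borel_measurable (H s)"
    and odd: "AE \<omega> in M. \<forall>t\<in>{s..T}. F t \<omega> (- \<zeta>' t \<omega>) = - F t \<omega> (\<zeta>' t \<omega>)"
    and z: "AE \<omega> in M. SF s \<zeta>' \<omega> = 0"
  shows "adm s (\<lambda>t \<omega>. \<eta> t \<omega> - \<beta> \<omega> *\<^sub>R \<zeta>' t \<omega>)"
    and "AE \<omega> in M. SF s \<eta> \<omega> \<le> SF s (\<lambda>t \<omega>. \<eta> t \<omega> - \<beta> \<omega> *\<^sub>R \<zeta>' t \<omega>) \<omega>"
proof -
  show "adm s (\<lambda>t \<omega>. \<eta> t \<omega> - \<beta> \<omega> *\<^sub>R \<zeta>' t \<omega>)"
    unfolding adm_def
  proof
    fix t assume t: "t \<in> {s..T}"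
    have eL: "\<eta> t \<in> L0A M H A t" and zL: "\<zeta>' t \<in> L0A M H A t" using ad adz t unfolding adm_def by simp_all
    have [measurable]: "\<eta> t \<in> borel_measurable (H t)" "\<zeta>' t \<in> borel_measurable (H t)"
      using eL zL by (simp_all add: L0A_H)
    have [measurable]: "\<beta> \<in> borel_measurable (H t)" by (rule meas_H_mono[OF _ _ \<beta>m]) (use t in simp_all)
    show "(\<lambda>\<omega>. \<eta> t \<omega> - \<beta> \<omega> *\<^sub>R \<zeta>' t \<omega>) \<in> L0A M H A t"
    proof (rule L0A_I)
      show "(\<lambda>\<omega>. \<eta> t \<omega> - \<beta> \<omega> *\<^sub>R \<zeta>' t \<omega>) \<in> borel_measurable (H t)" by measurable
      fix \<omega> assume w: "\<omega> \<in> space M"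
      show "\<eta> t \<omega> - \<beta> \<omega> *\<^sub>R \<zeta>' t \<omega> \<in> A"
        by (rule subA[OF L0A_A[OF eL w] L0A_A[OF zL w] negA[OF t w]])
    qed
  qed
  show "AE \<omega> in M. SF s \<eta> \<omega> \<le> SF s (\<lambda>t \<omega>. \<eta> t \<omega> - \<beta> \<omega> *\<^sub>R \<zeta>' t \<omega>) \<omega>"
    using AE_classF odd z AE_space
  proof eventually_elim
    case (elim \<omega>)
    note cF = elim(1) and od = elim(2) and zz = elim(3) and w = elim(4)
    show ?case unfolding vle_def
    proof
      fix i
      have each: "(F t \<omega> (\<eta> t \<omega>)) $ i - \<beta> \<omega> * (F t \<omega> (\<zeta>' t \<omega>)) $ i \<le> (F t \<omega> (\<eta> t \<omega> - \<beta> \<omega> *\<^sub>R \<zeta>' t \<omega>)) $ i"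
        if t: "t \<in> {s..T}" for t
      proof -
        have eL: "\<eta> t \<in> L0A M H A t" and zL: "\<zeta>' t \<in> L0A M H A t" using ad adz t unfolding adm_def by simp_all
        have "F t \<omega> (\<eta> t \<omega>) - \<beta> \<omega> *\<^sub>R F t \<omega> (\<zeta>' t \<omega>) \<le> F t \<omega> (\<eta> t \<omega> - \<beta> \<omega> *\<^sub>R \<zeta>' t \<omega>)"
          by (rule classF_shift[OF _ L0A_A[OF eL w] L0A_A[OF zL w] negA[OF t w]]) (use cF od t in simp_all)
        then show ?thesis unfolding vle_def by simp
      qed
      have "(\<Sum>t\<in>{s..T}. (F t \<omega> (\<eta> t \<omega>)) $ i - \<beta> \<omega> * (F t \<omega> (\<zeta>' t \<omega>)) $ i)
          \<le> (\<Sum>t\<in>{s..T}. (F t \<omega> (\<eta> t \<omega> - \<beta> \<omega> *\<^sub>R \<zeta>' t \<omega>)) $ i)"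
        by (rule sum_mono) (rule each)
      moreover have "(\<Sum>t\<in>{s..T}. (F t \<omega> (\<zeta>' t \<omega>)) $ i) = 0"
      proof -
        have "(SF s \<zeta>' \<omega>) $ i = 0" using zz by simp
        then show ?thesis unfolding SF_def sum_component .
      qed
      ultimately show "SF s \<eta> \<omega> $ i \<le> SF s (\<lambda>t \<omega>. \<eta> t \<omega> - \<beta> \<omega> *\<^sub>R \<zeta>' t \<omega>) \<omega> $ i"
        unfolding SF_def by (simp add: sum_component sum_subtractf sum_distrib_left[symmetric])
    qed
  qed
qed

end

context mt begin

lemma unbounded_not_conv:
  fixes X :: "nat \<Rightarrow> 'a::real_normed_vector"
  assumes G: "\<forall>B::nat. \<exists>N. \<forall>n\<ge>N. real B < norm (X n)"
  shows "\<not> convergent X"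
proof
  assume "convergent X"
  then have "Bseq X" by (rule convergent_imp_Bseq)
  then obtain K where K: "\<And>n. norm (X n) \<le> K" by (auto simp: Bseq_def)
  obtain B :: nat where "K \<le> real B" using real_arch_simple by blast
  moreover obtain N where "\<forall>n\<ge>N. real B < norm (X n)" using G by blast
  ultimately show False using K[of N] by auto
qed

lemma unbounded_subseq:
  fixes X :: "nat \<Rightarrow> 'a::real_normed_vector" and r :: "nat \<Rightarrow> nat"
  assumes G: "\<forall>B::nat. \<exists>N. \<forall>n\<ge>N. real B < norm (X n)" and r: "strict_mono r"
  shows "\<forall>B::nat. \<exists>N. \<forall>n\<ge>N. real B < norm (X (r n))"
proof
  fix B obtain N where N: "\<forall>n\<ge>N. real B < norm (X n)" using G by blast
  have "\<forall>n\<ge>N. real B < norm (X (r n))"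
  proof (intro allI impI)
    fix n assume "N \<le> n"
    then have "N \<le> r n" using seq_suble[OF r, of n] by simp
    then show "real B < norm (X (r n))" using N by blast
  qed
  then show "\<exists>N. \<forall>n\<ge>N. real B < norm (X (r n))" by blast
qed

lemma unbounded_inv:
  fixes X :: "nat \<Rightarrow> 'a::real_normed_vector"
  assumes G: "\<forall>B::nat. \<exists>N. \<forall>n\<ge>N. real B < norm (X n)"
  shows "(\<lambda>n. 1 / norm (X n)) \<longlonglongrightarrow> 0"
proof -
  have "filterlim (\<lambda>n. norm (X n)) at_top sequentially"
    unfolding filterlim_at_top
  proof
    fix Z :: real
    obtain B :: nat where "Z \<le> real B" using real_arch_simple by blast
    moreover obtain N where "\<forall>n\<ge>N. real B < norm (X n)" using G by blast
    ultimately show "eventually (\<lambda>n. Z \<le> norm (X n)) sequentially"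
      unfolding eventually_sequentially by (meson less_imp_le order.trans)
  qed
  from tendsto_inverse_0_at_top[OF this] show ?thesis by (simp add: inverse_eq_divide)
qed

lemma unit_limit:
  fixes X :: "nat \<Rightarrow> 'a::real_normed_vector"
  assumes G: "\<forall>B::nat. \<exists>N. \<forall>n\<ge>N. real B < norm (X n)"
    and c: "(\<lambda>n. (1 / norm (X n)) *\<^sub>R X n) \<longlonglongrightarrow> L"
  shows "norm L = 1"
proof -
  obtain N where N: "\<forall>n\<ge>N. real 0 < norm (X n)" using G by blast
  have "(\<lambda>n. norm ((1 / norm (X n)) *\<^sub>R X n)) \<longlonglongrightarrow> norm L" by (rule tendsto_norm[OF c])
  moreover have "eventually (\<lambda>n. norm ((1 / norm (X n)) *\<^sub>R X n) = 1) sequentially"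
    unfolding eventually_sequentially using N by (intro exI[of _ N]) simp
  then have "(\<lambda>n. norm ((1 / norm (X n)) *\<^sub>R X n)) \<longlonglongrightarrow> 1"
    by (rule tendsto_eventually)
  ultimately show ?thesis by (rule LIMSEQ_unique)
qed


lemma Dstep:
  assumes sT: "s \<le> T" and C: "Cl (Suc s)" and IH: "Dm s m"
  shows "Dm s (Suc m)"
  unfolding Dm_def
proof (intro allI impI)
  fix h hl and \<eta> :: "nat \<Rightarrow> nat \<Rightarrow> 'w \<Rightarrow> 'd mat"
  assume ad: "\<forall>n. adm s (\<eta> n)" and ineq: "AE \<omega> in M. \<forall>n. h n \<omega> \<le> SF s (\<eta> n) \<omega>"
    and cv: "AE \<omega> in M. (\<lambda>n. h n \<omega>) \<longlonglongrightarrow> hl \<omega>"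
    and dc: "AE \<omega> in M. convergent (\<lambda>n. \<eta> n s \<omega>) \<or> dim (range (\<lambda>n. \<eta> n s \<omega>)) \<le> Suc m"
  have spH: "space (H s) = space M" by (rule space_H[OF sT])
  have sL: "\<eta> n s \<in> L0A M H A s" for n using ad sT unfolding adm_def by simp
  have \<eta>m[measurable]: "\<eta> n s \<in> borel_measurable (H s)" for n using sL by (rule L0A_H)
  define G where "G \<omega> \<longleftrightarrow> (\<forall>B::nat. \<exists>N. \<forall>n\<ge>N. real B < norm (\<eta> n s \<omega>))" for \<omega>
  have Gm[measurable]: "Measurable.pred (H s) G" unfolding G_def by measurable
  define Y where "Y n \<omega> = (if G \<omega> then (1 / norm (\<eta> n s \<omega>)) *\<^sub>R \<eta> n s \<omega> else \<eta> n s \<omega>)" for n \<omega>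
  have Ym: "Y n \<in> borel_measurable (H s)" for n unfolding Y_def by measurable
  have Yb: "\<exists>B. \<forall>N. \<exists>n\<ge>N. norm (Y n \<omega>) \<le> B" if "\<omega> \<in> space (H s)" for \<omega>
  proof (cases "G \<omega>")
    case True
    have "norm (Y n \<omega>) \<le> 1" for n
      using True by (cases "\<eta> n s \<omega> = 0") (simp_all add: Y_def)
    then show ?thesis by blast
  next
    case False
    then obtain B :: nat where B: "\<forall>N. \<exists>n\<ge>N. \<not> real B < norm (\<eta> n s \<omega>)" unfolding G_def by blast
    have "\<forall>N. \<exists>n\<ge>N. norm (Y n \<omega>) \<le> real B"
    proof
      fix N obtain n where "n \<ge> N" "\<not> real B < norm (\<eta> n s \<omega>)" using B by blast
      then show "\<exists>n\<ge>N. norm (Y n \<omega>) \<le> real B" using False by (intro exI[of _ n]) (simp add: Y_def)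
    qed
    then show ?thesis by blast
  qed
  obtain \<tau> where \<tau>m: "\<And>k. \<tau> k \<in> H s \<rightarrow>\<^sub>M count_space UNIV"
    and \<tau>p: "\<And>\<omega>. \<omega> \<in> space M \<Longrightarrow> strict_mono (\<lambda>k. \<tau> k \<omega>) \<and> convergent (\<lambda>k. Y (\<tau> k \<omega>) \<omega>)"
    using KS[of Y "H s", OF Ym Yb] spH by blast
  have sm: "\<And>\<omega>. \<omega> \<in> space M \<Longrightarrow> strict_mono (\<lambda>k. \<tau> k \<omega>)" using \<tau>p by blast
  define \<eta>1 where "\<eta>1 k = (\<lambda>t \<omega>. \<eta> (\<tau> k \<omega>) t \<omega>)" for k
  define h1 where "h1 k \<omega> = h (\<tau> k \<omega>) \<omega>" for k \<omega>
  have R: "(\<forall>k. adm s (\<lambda>t \<omega>. \<eta> (\<tau> k \<omega>) t \<omega>))"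
    "(AE \<omega> in M. \<forall>k. h (\<tau> k \<omega>) \<omega> \<le> SF s (\<lambda>t \<omega>. \<eta> (\<tau> k \<omega>) t \<omega>) \<omega>)"
    "(AE \<omega> in M. (\<lambda>k. h (\<tau> k \<omega>) \<omega>) \<longlonglongrightarrow> hl \<omega>)"
    using reidx[where \<tau>=\<tau> and \<eta>=\<eta> and h=h and hl=hl, OF sT \<tau>m sm ad ineq cv] by blast+
  have ad1: "\<forall>k. adm s (\<eta>1 k)" using R(1) unfolding \<eta>1_def .
  have ineq1: "AE \<omega> in M. \<forall>k. h1 k \<omega> \<le> SF s (\<eta>1 k) \<omega>" using R(2) unfolding \<eta>1_def h1_def .
  have cv1: "AE \<omega> in M. (\<lambda>k. h1 k \<omega>) \<longlonglongrightarrow> hl \<omega>" using R(3) unfolding h1_def .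
  have sL1: "\<eta>1 k s \<in> L0A M H A s" for k using ad1 sT unfolding adm_def by simp
  have \<eta>1m[measurable]: "\<eta>1 k s \<in> borel_measurable (H s)" for k using sL1 by (rule L0A_H)
  have F1: "\<forall>B::nat. \<exists>N. \<forall>k\<ge>N. real B < norm (\<eta>1 k s \<omega>)" if "\<omega> \<in> space M" "G \<omega>" for \<omega>
    using unbounded_subseq[of "\<lambda>n. \<eta> n s \<omega>" "\<lambda>k. \<tau> k \<omega>"] that \<tau>p unfolding G_def \<eta>1_def by blast
  have F2: "convergent (\<lambda>k. \<eta>1 k s \<omega>)" if "\<omega> \<in> space M" "\<not> G \<omega>" for \<omega>
    using \<tau>p[OF that(1)] that(2) unfolding \<eta>1_def Y_def by simp
  define Lm where "Lm \<omega> = lim (\<lambda>k. Y (\<tau> k \<omega>) \<omega>)" for \<omega>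
  have YT: "(\<lambda>\<omega>. Y (\<tau> k \<omega>) \<omega>) \<in> borel_measurable (H s)" for k
    by (rule measurable_compose_countable[where f=Y]) (use Ym \<tau>m in simp_all)
  have Lmm[measurable]: "Lm \<in> borel_measurable (H s)" unfolding Lm_def by (rule borel_measurable_lim_metric[OF YT])
  have cA[measurable]: "A \<in> sets borel" by (rule borel_closed[OF clA])
  define \<eta>t where "\<eta>t \<omega> = (if G \<omega> \<and> Lm \<omega> \<in> A then Lm \<omega> else 0)" for \<omega>
  have \<eta>tL: "\<eta>t \<in> L0A M H A s"
  proof (rule L0A_I)
    show "\<eta>t \<in> borel_measurable (H s)" unfolding \<eta>t_def by measurable
  qed (simp add: \<eta>t_def zeroA)
  define \<alpha> where "\<alpha> k \<omega> = (if G \<omega> then 1 / norm (\<eta>1 k s \<omega>) else 0)" for k \<omega>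
  have \<alpha>m[measurable]: "\<alpha> k \<in> borel_measurable (H s)" for k unfolding \<alpha>_def by measurable
  have \<alpha>0: "\<alpha> k \<omega> \<ge> 0" for k \<omega> by (simp add: \<alpha>_def)
  define X where "X k \<omega> = \<alpha> k \<omega> *\<^sub>R \<eta>1 k s \<omega>" for k \<omega>
  have F4: "(\<lambda>k. X k \<omega>) \<longlonglongrightarrow> \<eta>t \<omega>" if w: "\<omega> \<in> space M" for \<omega>
  proof (cases "G \<omega>")
    case True
    have XY: "X k \<omega> = Y (\<tau> k \<omega>) \<omega>" for k using True by (simp add: X_def \<alpha>_def Y_def \<eta>1_def)
    have c: "(\<lambda>k. X k \<omega>) \<longlonglongrightarrow> Lm \<omega>"
      unfolding XY Lm_def using \<tau>p[OF w] by (simp add: convergent_LIMSEQ_iff)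
    have "X k \<omega> \<in> A" for k unfolding X_def by (rule scaleA[OF L0A_A[OF sL1 w] \<alpha>0])
    then have "Lm \<omega> \<in> A" using closed_sequentially[OF clA _ c] by blast
    then show ?thesis using c True by (simp add: \<eta>t_def)
  next
    case False
    then show ?thesis by (simp add: X_def \<alpha>_def \<eta>t_def)
  qed
  have F4n: "norm (\<eta>t \<omega>) = 1" if w: "\<omega> \<in> space M" and g: "G \<omega>" for \<omega>
  proof -
    have "(\<lambda>k. (1 / norm (\<eta>1 k s \<omega>)) *\<^sub>R \<eta>1 k s \<omega>) \<longlonglongrightarrow> \<eta>t \<omega>"
      using F4[OF w] g by (simp add: X_def \<alpha>_def)
    then show ?thesis by (rule unit_limit[OF F1[OF w g]])
  qed
  have F4s: "\<eta>t \<omega> \<in> span (range (\<lambda>k. \<eta>1 k s \<omega>))" if w: "\<omega> \<in> space M" for \<omega>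
  proof (rule closed_sequentially[OF closed_span _ F4[OF w]])
    fix k show "X k \<omega> \<in> span (range (\<lambda>k. \<eta>1 k s \<omega>))"
      unfolding X_def by (intro span_mul span_base) auto
  qed
  have F5: "(\<lambda>k. \<alpha> k \<omega>) \<longlonglongrightarrow> 0" if w: "\<omega> \<in> space M" for \<omega>
  proof (cases "G \<omega>")
    case True
    then show ?thesis using unbounded_inv[OF F1[OF w True]] by (simp add: \<alpha>_def)
  qed (simp add: \<alpha>_def)
  define h2 where "h2 k \<omega> = \<alpha> k \<omega> *\<^sub>R h1 k \<omega> - F s \<omega> (X k \<omega>)" for k \<omega>
  define \<eta>2 where "\<eta>2 k = (\<lambda>t \<omega>. \<alpha> k \<omega> *\<^sub>R \<eta>1 k t \<omega>)" for k
  have ad2: "\<forall>k. adm (Suc s) (\<eta>2 k)"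
    unfolding adm_def
  proof (intro allI ballI)
    fix k t assume t: "t \<in> {Suc s..T}"
    have eL: "\<eta>1 k t \<in> L0A M H A t" using ad1 t unfolding adm_def by simp
    have [measurable]: "\<eta>1 k t \<in> borel_measurable (H t)" using eL by (rule L0A_H)
    have [measurable]: "\<alpha> k \<in> borel_measurable (H t)" by (rule meas_H_mono[OF _ _ \<alpha>m]) (use t in simp_all)
    show "\<eta>2 k t \<in> L0A M H A t"
    proof (rule L0A_I)
      show "\<eta>2 k t \<in> borel_measurable (H t)" unfolding \<eta>2_def by measurable
      fix \<omega> assume w: "\<omega> \<in> space M"
      show "\<eta>2 k t \<omega> \<in> A" unfolding \<eta>2_def by (rule scaleA[OF L0A_A[OF eL w] \<alpha>0])
    qed
  qed
  have ineq2: "AE \<omega> in M. \<forall>k. h2 k \<omega> \<le> SF (Suc s) (\<eta>2 k) \<omega>"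
    using ineq1 AE_classF
  proof eventually_elim
    case (elim \<omega>)
    show ?case
    proof
      fix k
      have a: "h1 k \<omega> \<le> F s \<omega> (\<eta>1 k s \<omega>) + SF (Suc s) (\<eta>1 k) \<omega>"
        using elim(1)[rule_format, of k] unfolding SF_split[OF sT] .
      have b: "\<alpha> k \<omega> *\<^sub>R h1 k \<omega> \<le> \<alpha> k \<omega> *\<^sub>R F s \<omega> (\<eta>1 k s \<omega>) + \<alpha> k \<omega> *\<^sub>R SF (Suc s) (\<eta>1 k) \<omega>"
        using vle_scale[OF \<alpha>0 a] by (simp add: scaleR_add_right)
      have c: "\<alpha> k \<omega> *\<^sub>R F s \<omega> (\<eta>1 k s \<omega>) = F s \<omega> (X k \<omega>)"
        unfolding X_def using classF_hom[of "F s \<omega>" "\<alpha> k \<omega>" "\<eta>1 k s \<omega>"] elim(2) \<alpha>0 by simp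
      have d: "\<alpha> k \<omega> *\<^sub>R SF (Suc s) (\<eta>1 k) \<omega> = SF (Suc s) (\<eta>2 k) \<omega>"
        unfolding \<eta>2_def using SF_scale[of \<omega> "\<alpha> k" "Suc s" "\<eta>1 k"] elim(2) \<alpha>0 by simp
      show "h2 k \<omega> \<le> SF (Suc s) (\<eta>2 k) \<omega>"
        using b unfolding c d h2_def vle_def by (simp add: algebra_simps)
    qed
  qed
  have cv2: "AE \<omega> in M. (\<lambda>k. h2 k \<omega>) \<longlonglongrightarrow> - F s \<omega> (\<eta>t \<omega>)"
    using cv1 AE_classF AE_space
  proof eventually_elim
    case (elim \<omega>)
    have "(\<lambda>k. \<alpha> k \<omega> *\<^sub>R h1 k \<omega>) \<longlonglongrightarrow> 0 *\<^sub>R hl \<omega>" by (rule tendsto_scaleR[OF F5[OF elim(3)] elim(1)])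
    moreover have "(\<lambda>k. F s \<omega> (X k \<omega>)) \<longlonglongrightarrow> F s \<omega> (\<eta>t \<omega>)"
      by (rule classF_tendsto[OF _ F4[OF elim(3)]]) (use elim(2) in blast)
    ultimately have "(\<lambda>k. \<alpha> k \<omega> *\<^sub>R h1 k \<omega> - F s \<omega> (X k \<omega>)) \<longlonglongrightarrow> 0 *\<^sub>R hl \<omega> - F s \<omega> (\<eta>t \<omega>)"
      by (rule tendsto_diff)
    then show ?case unfolding h2_def by simp
  qed
  obtain \<eta>'' where \<eta>''ad: "adm (Suc s) \<eta>''" and ie: "AE \<omega> in M. - F s \<omega> (\<eta>t \<omega>) \<le> SF (Suc s) \<eta>'' \<omega>"
    using C[unfolded Cl_def, rule_format, OF ad2[rule_format] ineq2 cv2] by blast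
  note K = KP_apply[OF sT \<eta>tL \<eta>''ad ie]
  define \<zeta> where "\<zeta> t = (if t = s then \<eta>t else \<eta>'' t)" for t
  have ad\<zeta>: "adm s \<zeta>"
    unfolding adm_def
  proof
    fix t assume t: "t \<in> {s..T}"
    show "\<zeta> t \<in> L0A M H A t"
    proof (cases "t = s")
      case True then show ?thesis using \<eta>tL by (simp add: \<zeta>_def)
    next
      case False
      then have "t \<in> {Suc s..T}" using t by auto
      then show ?thesis using \<eta>''ad False unfolding adm_def \<zeta>_def by simp
    qed
  qed
  have odd\<zeta>: "AE \<omega> in M. F t \<omega> (- \<zeta> t \<omega>) = - F t \<omega> (\<zeta> t \<omega>)" if t: "t \<in> {s..T}" for t
  proof (cases "t = s")
    case True then show ?thesis using K(2) by (simp add: \<zeta>_def)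
  next
    case False
    then have "t \<in> {Suc s..T}" using t by auto
    then show ?thesis using K(4)[of t] False by (simp add: \<zeta>_def)
  qed
  have neg\<zeta>: "AE \<omega> in M. - \<zeta> t \<omega> \<in> A" if t: "t \<in> {s..T}" for t
  proof (cases "t = s")
    case True then show ?thesis using K(3) by (simp add: \<zeta>_def)
  next
    case False
    then have "t \<in> {Suc s..T}" using t by auto
    then show ?thesis using K(5)[of t] False by (simp add: \<zeta>_def)
  qed
  have z\<zeta>: "AE \<omega> in M. SF s \<zeta> \<omega> = 0"
    using K(1)
  proof (rule eventually_mono)
    fix \<omega> assume a: "F s \<omega> (\<eta>t \<omega>) + SF (Suc s) \<eta>'' \<omega> = 0"
    have "SF (Suc s) \<zeta> \<omega> = SF (Suc s) \<eta>'' \<omega>" unfolding SF_def by (rule sum.cong) (auto simp: \<zeta>_def)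
    then show "SF s \<zeta> \<omega> = 0" using a SF_split[OF sT, of \<zeta> \<omega>] by (simp add: \<zeta>_def)
  qed
  define \<zeta>' where "\<zeta>' = (\<lambda>t \<omega>. if - \<zeta> t \<omega> \<in> A then \<zeta> t \<omega> else 0)"
  have S1: "adm s \<zeta>'" and S2: "\<And>t \<omega>. t \<in> {s..T} \<Longrightarrow> \<omega> \<in> space M \<Longrightarrow> - \<zeta>' t \<omega> \<in> A"
    and S3: "AE \<omega> in M. \<forall>t\<in>{s..T}. \<zeta>' t \<omega> = \<zeta> t \<omega>"
    and S4: "AE \<omega> in M. \<forall>t\<in>{s..T}. F t \<omega> (- \<zeta>' t \<omega>) = - F t \<omega> (\<zeta>' t \<omega>)"
    and S5: "AE \<omega> in M. SF s \<zeta>' \<omega> = 0"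
    unfolding \<zeta>'_def
    subgoal by (rule symm_fix(1)[OF sT ad\<zeta>]) (use odd\<zeta> neg\<zeta> z\<zeta> in blast)+
    subgoal by (rule symm_fix(2)[OF sT ad\<zeta>]) (use odd\<zeta> neg\<zeta> z\<zeta> in blast)+
    subgoal by (rule symm_fix(3)[OF sT ad\<zeta>]) (use odd\<zeta> neg\<zeta> z\<zeta> in blast)+
    subgoal by (rule symm_fix(4)[OF sT ad\<zeta>]) (use odd\<zeta> neg\<zeta> z\<zeta> in blast)+
    subgoal by (rule symm_fix(5)[OF sT ad\<zeta>]) (use odd\<zeta> neg\<zeta> z\<zeta> in blast)+
    done
  have z'L: "\<zeta>' s \<in> L0A M H A s" using S1 sT unfolding adm_def by simp
  have [measurable]: "\<zeta>' s \<in> borel_measurable (H s)" using z'L by (rule L0A_H)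
  define \<beta> where "\<beta> k \<omega> = (if G \<omega> then \<eta>1 k s \<omega> \<bullet> \<zeta>' s \<omega> else 0)" for k \<omega>
  have \<beta>m: "\<beta> k \<in> borel_measurable (H s)" for k unfolding \<beta>_def by measurable
  define \<eta>3 where "\<eta>3 k = (\<lambda>t \<omega>. \<eta>1 k t \<omega> - \<beta> k \<omega> *\<^sub>R \<zeta>' t \<omega>)" for k
  have sh: "adm s (\<eta>3 k) \<and> (AE \<omega> in M. SF s (\<eta>1 k) \<omega> \<le> SF s (\<eta>3 k) \<omega>)" for k
    using shift[OF sT ad1[rule_format, of k] S1 S2 \<beta>m[of k] S4 S5] unfolding \<eta>3_def by blast
  have ad3: "\<forall>k. adm s (\<eta>3 k)" using sh by blast
  have "AE \<omega> in M. \<forall>k. SF s (\<eta>1 k) \<omega> \<le> SF s (\<eta>3 k) \<omega>"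
    unfolding AE_all_countable using sh by blast
  then have ineq3: "AE \<omega> in M. \<forall>k. h1 k \<omega> \<le> SF s (\<eta>3 k) \<omega>"
    using ineq1 by eventually_elim (blast intro: order.trans)
  have dc3: "AE \<omega> in M. convergent (\<lambda>k. \<eta>3 k s \<omega>) \<or> dim (range (\<lambda>k. \<eta>3 k s \<omega>)) \<le> m"
    using dc S3 AE_space
  proof eventually_elim
    case (elim \<omega>)
    note d = elim(1) and e = elim(2) and w = elim(3)
    show ?case
    proof (cases "G \<omega>")
      case False
      then have "(\<lambda>k. \<eta>3 k s \<omega>) = (\<lambda>k. \<eta>1 k s \<omega>)" by (simp add: \<eta>3_def \<beta>_def)
      then show ?thesis using F2[OF w False] by simp
    next
      case True
      have nc: "\<not> convergent (\<lambda>n. \<eta> n s \<omega>)" by (rule unbounded_not_conv) (use True in \<open>simp add: G_def\<close>)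
      with d have dR0: "dim (range (\<lambda>n. \<eta> n s \<omega>)) \<le> Suc m" by simp
      define u where "u = \<zeta>' s \<omega>"
      have u: "u = \<eta>t \<omega>" using e sT by (simp add: u_def \<zeta>_def)
      have un: "u \<bullet> u = 1" using F4n[OF w True] u by (simp add: power2_norm_eq_inner[symmetric])
      define R where "R = range (\<lambda>k. \<eta>1 k s \<omega>)"
      have uR: "u \<in> span R" unfolding R_def u using F4s[OF w] .
      have e3: "\<eta>3 k s \<omega> = \<eta>1 k s \<omega> - (\<eta>1 k s \<omega> \<bullet> u) *\<^sub>R u" for k
        using True by (simp add: \<eta>3_def \<beta>_def u_def)
      have "dim (range (\<lambda>k. \<eta>3 k s \<omega>)) < dim R"
      proof (rule dim_drop[OF uR])
        show "u \<bullet> u \<noteq> 0" using un by simp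
        show "range (\<lambda>k. \<eta>3 k s \<omega>) \<subseteq> span R"
        proof
          fix x assume "x \<in> range (\<lambda>k. \<eta>3 k s \<omega>)"
          then obtain k where x: "x = \<eta>3 k s \<omega>" by blast
          have "\<eta>1 k s \<omega> \<in> span R" unfolding R_def by (rule span_base) auto
          then show "x \<in> span R" unfolding x e3 by (intro span_diff span_mul uR)
        qed
        fix x assume "x \<in> range (\<lambda>k. \<eta>3 k s \<omega>)"
        then obtain k where x: "x = \<eta>3 k s \<omega>" by blast
        show "x \<bullet> u = 0" unfolding x e3 using un by (simp add: inner_diff_left)
      qed
      moreover have "dim R \<le> dim (range (\<lambda>n. \<eta> n s \<omega>))"
        by (rule dim_subset) (auto simp: R_def \<eta>1_def)
      ultimately show ?thesis using dR0 by simp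
    qed
  qed
  show "\<exists>\<eta>'. adm s \<eta>' \<and> (AE \<omega> in M. hl \<omega> \<le> SF s \<eta>' \<omega>)"
    by (rule IH[unfolded Dm_def, rule_format, OF ad3[rule_format] ineq3 cv1 dc3])
qed

end

context mt begin

lemma Dm_all: "s \<le> T \<Longrightarrow> Cl (Suc s) \<Longrightarrow> Dm s m"
proof (induction m)
  case 0 then show ?case by (rule D0)
next
  case (Suc m) then show ?case using Dstep by blast
qed

lemma Cl0: "Cl 0"
proof -
  have "j \<le> Suc T \<Longrightarrow> Cl (Suc T - j)" for j
  proof (induction j)
    case 0 then show ?case using Cl_top by simp
  next
    case (Suc j)
    then have jT: "j \<le> T" by simp
    have C: "Cl (Suc (T - j))" using Suc.IH jT by (simp add: Suc_diff_le)
    have "Cl (T - j)" by (rule Dfull[OF Dm_all[OF _ C]]) simp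
    then show ?case by simp
  qed
  from this[of "Suc T"] show ?thesis by simp
qed

end

theorem mainTheorem1:
  fixes M :: "'w measure" and H :: "nat \<Rightarrow> 'w measure" and T :: nat
    and A :: "('d::finite) mat set" and F :: "nat \<Rightarrow> 'w \<Rightarrow> 'd mat \<Rightarrow> 'd vect"
    and g :: "nat \<Rightarrow> 'w \<Rightarrow> 'd vect" and g0 :: "'w \<Rightarrow> 'd vect"
  assumes "prob_space M" and "complete_measure M"
    and "\<forall>t\<le>T. subalgebra M (H t)"
    and "\<forall>s t. s \<le> t \<longrightarrow> t \<le> T \<longrightarrow> sets (H s) \<subseteq> sets (H t)"
    and "closed A" and "convex A" and "cone A"
    and "randomF M A F"
    and "KP M H A F T" and "HN0 M H A F T"
    and "\<forall>n. inAT M H A F T (g n)"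
    and "g0 \<in> borel_measurable M"
    and "conv_in_prob M g g0"
  shows "inAT M H A F T g0"
proof -
  note P = assms(1) and gA = assms(11) and g0m = assms(12) and cip = assms(13)
  have ex: "\<forall>n. \<exists>\<xi> r. inNproc M H A F T \<xi> \<and> r \<in> borel_measurable M \<and> (\<forall>\<omega>\<in>space M. nonneg_vec (r \<omega>))
        \<and> (AE \<omega> in M. g n \<omega> = V \<xi> T \<omega> - r \<omega>)"
    using gA unfolding inAT_def by blast
  have gm: "g n \<in> borel_measurable M" for n using gA unfolding inAT_def by blast
  have "\<exists>\<xi>. \<forall>n. \<exists>r. inNproc M H A F T (\<xi> n) \<and> r \<in> borel_measurable M \<and> (\<forall>\<omega>\<in>space M. nonneg_vec (r \<omega>))
        \<and> (AE \<omega> in M. g n \<omega> = V (\<xi> n) T \<omega> - r \<omega>)"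
    using ex by (rule choice)
  then obtain \<xi> where "\<forall>n. \<exists>r. inNproc M H A F T (\<xi> n) \<and> r \<in> borel_measurable M \<and> (\<forall>\<omega>\<in>space M. nonneg_vec (r \<omega>))
        \<and> (AE \<omega> in M. g n \<omega> = V (\<xi> n) T \<omega> - r \<omega>)" by blast
  then have "\<exists>r. \<forall>n. inNproc M H A F T (\<xi> n) \<and> r n \<in> borel_measurable M \<and> (\<forall>\<omega>\<in>space M. nonneg_vec (r n \<omega>))
        \<and> (AE \<omega> in M. g n \<omega> = V (\<xi> n) T \<omega> - r n \<omega>)"
    by (rule choice)
  then obtain r where r: "\<And>n. inNproc M H A F T (\<xi> n)" "\<And>n. \<forall>\<omega>\<in>space M. nonneg_vec (r n \<omega>)"
      "\<And>n. AE \<omega> in M. g n \<omega> = V (\<xi> n) T \<omega> - r n \<omega>" by blast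
  have "\<forall>n t. \<exists>\<eta>. t \<le> T \<longrightarrow> \<eta> \<in> L0A M H A t \<and> (AE \<omega> in M. \<xi> n t \<omega> = F t \<omega> (\<eta> \<omega>))"
    using r(1) unfolding inNproc_def inN_def by blast
  then have "\<forall>n. \<exists>\<eta>. \<forall>t. t \<le> T \<longrightarrow> \<eta> t \<in> L0A M H A t \<and> (AE \<omega> in M. \<xi> n t \<omega> = F t \<omega> (\<eta> t \<omega>))"
    by (intro allI choice) blast
  then have "\<exists>\<eta>. \<forall>n. \<forall>t. t \<le> T \<longrightarrow> \<eta> n t \<in> L0A M H A t \<and> (AE \<omega> in M. \<xi> n t \<omega> = F t \<omega> (\<eta> n t \<omega>))"
    by (rule choice)
  then obtain \<eta> where \<eta>: "\<And>n t. t \<le> T \<Longrightarrow> \<eta> n t \<in> L0A M H A t"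
      "\<And>n t. t \<le> T \<Longrightarrow> AE \<omega> in M. \<xi> n t \<omega> = F t \<omega> (\<eta> n t \<omega>)" by blast
  have neA: "A \<noteq> {}"
  proof -
    have "space M \<noteq> {}" using prob_space.not_empty[OF P] .
    then obtain \<omega> where w: "\<omega> \<in> space M" by blast
    have "\<eta> 0 0 \<omega> \<in> A" using \<eta>(1)[of 0 0] w unfolding L0A_def by simp
    then show ?thesis by blast
  qed
  interpret mt M H T A F
    by (rule mt.intro) (use assms neA in simp_all)
  have ad: "\<forall>n. adm 0 (\<eta> n)" unfolding adm_def using \<eta>(1) by simp
  have ineq: "AE \<omega> in M. \<forall>n. g n \<omega> \<le> SF 0 (\<eta> n) \<omega>"
    unfolding AE_all_countable
  proof
    fix n
    have "AE \<omega> in M. \<forall>t\<in>{..T}. \<xi> n t \<omega> = F t \<omega> (\<eta> n t \<omega>)"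
      by (rule AE_finite_allI) (use \<eta>(2) in simp_all)
    then show "AE \<omega> in M. g n \<omega> \<le> SF 0 (\<eta> n) \<omega>"
      using r(3)[of n] AE_space
    proof eventually_elim
      case (elim \<omega>)
      have "V (\<xi> n) T \<omega> = SF 0 (\<eta> n) \<omega>"
        unfolding V_def SF_def atLeast0AtMost by (rule sum.cong) (use elim(1) in simp_all)
      moreover have "nonneg_vec (r n \<omega>)" using r(2) elim(3) by blast
      ultimately show ?case using elim(2) unfolding nonneg_vec_def vle_def by simp
    qed
  qed
  obtain \<sigma> where \<sigma>: "strict_mono \<sigma>" "AE \<omega> in M. (\<lambda>k. g (\<sigma> k) \<omega>) \<longlonglongrightarrow> g0 \<omega>"
    using conv_prob_subseq[OF P gm g0m cip] by blast
  have ad': "\<forall>k. adm 0 (\<eta> (\<sigma> k))" using ad by blast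
  have ineq': "AE \<omega> in M. \<forall>k. g (\<sigma> k) \<omega> \<le> SF 0 (\<eta> (\<sigma> k)) \<omega>" using ineq by eventually_elim blast
  obtain \<eta>s where \<eta>s: "adm 0 \<eta>s" "AE \<omega> in M. g0 \<omega> \<le> SF 0 \<eta>s \<omega>"
    using Cl0[unfolded Cl_def, rule_format, OF ad'[rule_format] ineq' \<sigma>(2)] by blast
  define \<xi>s where "\<xi>s t = (\<lambda>\<omega>. F t \<omega> (\<eta>s t \<omega>))" for t
  define v where "v \<omega> = V \<xi>s T \<omega> - g0 \<omega>" for \<omega>
  define rs where "rs \<omega> = (if nonneg_vec (v \<omega>) then v \<omega> else 0)" for \<omega>
  have sL: "t \<le> T \<Longrightarrow> \<eta>s t \<in> L0A M H A t" for t using \<eta>s(1) unfolding adm_def by simp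
  have ip: "inNproc M H A F T \<xi>s" unfolding inNproc_def \<xi>s_def using inN_F sL by blast
  have Vm: "V \<xi>s T \<in> borel_measurable M"
  proof -
    have "(\<lambda>\<omega>. \<Sum>t\<le>T. F t \<omega> (\<eta>s t \<omega>)) \<in> borel_measurable M"
    proof (rule borel_measurable_sum)
      fix t assume "t \<in> {..T}"
      then show "(\<lambda>\<omega>. F t \<omega> (\<eta>s t \<omega>)) \<in> borel_measurable M" using F_meas L0A_M sL by simp
    qed
    then show ?thesis unfolding V_def \<xi>s_def .
  qed
  have vm[measurable]: "v \<in> borel_measurable M" unfolding v_def using Vm g0m by measurable
  have rsm: "rs \<in> borel_measurable M" unfolding rs_def nonneg_vec_def by measurable
  have rsn: "\<forall>\<omega>\<in>space M. nonneg_vec (rs \<omega>)" by (simp add: rs_def nonneg_vec_def)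
  have eq: "AE \<omega> in M. g0 \<omega> = V \<xi>s T \<omega> - rs \<omega>"
    using \<eta>s(2)
  proof (rule eventually_mono)
    fix \<omega> assume a: "g0 \<omega> \<le> SF 0 \<eta>s \<omega>"
    have "V \<xi>s T \<omega> = SF 0 \<eta>s \<omega>" unfolding V_def SF_def \<xi>s_def atLeast0AtMost by simp
    then have "nonneg_vec (v \<omega>)" using a unfolding v_def nonneg_vec_def vle_def by simp
    then show "g0 \<omega> = V \<xi>s T \<omega> - rs \<omega>" by (simp add: rs_def v_def)
  qed
  show ?thesis unfolding inAT_def using g0m ip rsm rsn eq by blast
qed

end
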